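(* Suppose there is an algorithm which, given any integer linear recurrence sequence $\langle u_n\rangle_{n=0}^\infty$ of order $6$, decides whether there exists $N$ such that $u_n\ge 0$ for all $n\ge N$ (i.e. the Ultimate Positivity Problem is decidable for integer LRS of order $6$). Then for every $t\in\mathcal{T}$, the Lagrange constant $L_\infty(t)$ is a computable real number.
   Context: An integer linear recurrence sequence (LRS) of order $k$ is a sequence $\langle u_n\rangle_{n=0}^\infty$ of integers for which there are integers $a_1,\ldots,a_k$ with $a_k\ne 0$ such that $u_{n+k}=a_1u_{n+k-1}+\cdots+a_ku_n$ for all $n\ge0$; it is given as input by the $2k$-tuple $(a_1,\ldots,a_k,u_0,\ldots,u_{k-1})$. For a real number $x$, the Lagrange constant is $L_\infty(x)=\inf\{c\in\mathbb{R}: |x-\frac{n}{m}|<\frac{c}{m^2} \text{ for infinitely many pairs } (n,m) \text{ with } n,m\in\mathbb{Z},\ m\neq 0\}$. Let $\mathcal{A}=\{p+qi\in\mathbb{C}: p,q\in\mathbb{Q},\ p^2+q^2=1,\ p\neq 0,\ q\neq 0\}$, and let $\mathcal{T}=\{\frac{\arg\alpha}{2\pi}:\alpha\in\mathcal{A}\}$, where $\arg$ denotes the principal argument with values in $(-\pi,\pi]$. A real number $x$ is computable if there is an algorithm which, given any rational $\varepsilon>0$, returns a rational $q$ with $|q-x|<\varepsilon$. *)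

theory Defs
  imports "HOL-Analysis.Analysis" "HOL-Library.Nat_Bijection"
begin

datatype recf =
    Zero
  | Succ
  | Proj nat
  | Comp recf "recf list"
  | Prec recf recf
  | Minim recf

inductive eval :: "recf \<Rightarrow> nat list \<Rightarrow> nat \<Rightarrow> bool" where
  eval_Zero: "eval Zero xs 0"
| eval_Succ: "eval Succ (x # xs) (Suc x)"
| eval_Proj: "i < length xs \<Longrightarrow> eval (Proj i) xs (xs ! i)"
| eval_Comp: "length ys = length gs \<Longrightarrow> (\<forall>i < length gs. eval (gs ! i) xs (ys ! i))
     \<Longrightarrow> eval f ys z \<Longrightarrow> eval (Comp f gs) xs z"
| eval_Prec0: "eval f xs y \<Longrightarrow> eval (Prec f g) (0 # xs) y"
| eval_PrecS: "eval (Prec f g) (n # xs) y \<Longrightarrow> eval g (n # y # xs) z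
     \<Longrightarrow> eval (Prec f g) (Suc n # xs) z"
| eval_Minim: "eval f (n # xs) 0 \<Longrightarrow> (\<forall>m < n. \<exists>y. eval f (m # xs) y \<and> y \<noteq> 0)
     \<Longrightarrow> eval (Minim f) xs n"

definition rat_of_code :: "nat \<Rightarrow> real" where
  "rat_of_code c = real_of_int (int_decode (fst (prod_decode c))) / real (Suc (snd (prod_decode c)))"

text \<open>A real x is computable: some algorithm, given a positive rational
  eps = p / (n+1) (with p \<ge> 1) as the pair [p, n], returns (a code of) a rational q with
  |q - x| < eps.\<close>
definition computable_real :: "real \<Rightarrow> bool" where
  "computable_real x \<longleftrightarrow> (\<exists>f. \<forall>p n. p > 0 \<longrightarrow>
      (\<exists>c. eval f [p, n] c \<and> \<bar>rat_of_code c - x\<bar> < real p / real (Suc n)))"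

text \<open>u is the integer LRS with recurrence coefficients a = [a_1,...,a_k]
  and initial values u0 = [u_0,...,u_{k-1}]:
  u (n+k) = a_1 u(n+k-1) + ... + a_k u(n).\<close>
definition is_LRS :: "int list \<Rightarrow> int list \<Rightarrow> (nat \<Rightarrow> int) \<Rightarrow> bool" where
  "is_LRS a u0 u \<longleftrightarrow> length a = length u0 \<and>
     (\<forall>i < length u0. u i = u0 ! i) \<and>
     (\<forall>n. u (n + length a) = (\<Sum>j < length a. a ! j * u (n + length a - 1 - j)))"

definition ultimately_nonneg :: "(nat \<Rightarrow> int) \<Rightarrow> bool" where
  "ultimately_nonneg u \<longleftrightarrow> (\<exists>N. \<forall>n \<ge> N. u n \<ge> 0)"

text \<open>Decidability of the Ultimate Positivity Problem for integer LRS of order 6: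
  an algorithm which, on input the 12-tuple (a_1..a_6,u_0..u_5) (each integer coded
  by int_encode) with a_6 \<noteq> 0, halts with a nonzero output iff the LRS is ultimately
  nonnegative.\<close>
definition UPP_decidable_order6 :: bool where
  "UPP_decidable_order6 \<longleftrightarrow> (\<exists>d. \<forall>a u0 :: int list.
      length a = 6 \<longrightarrow> length u0 = 6 \<longrightarrow> a ! 5 \<noteq> 0 \<longrightarrow>
      (\<exists>r. eval d (map int_encode (a @ u0)) r \<and>
          (r \<noteq> 0 \<longleftrightarrow> (\<forall>u. is_LRS a u0 u \<longrightarrow> ultimately_nonneg u))))"

definition lagrange_constant :: "real \<Rightarrow> real" where
  "lagrange_constant x = Inf {c :: real. infinite {(n :: int, m :: int). m \<noteq> 0 \<and>
       \<bar>x - real_of_int n / real_of_int m\<bar> < c / (real_of_int m)\<^sup>2}}"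

definition setA :: "complex set" where
  "setA = {Complex p q | p q. p \<in> \<rat> \<and> q \<in> \<rat> \<and> p\<^sup>2 + q\<^sup>2 = 1 \<and> p \<noteq> 0 \<and> q \<noteq> 0}"

definition setT :: "real set" where
  "setT = (\<lambda>\<alpha>. Arg \<alpha> / (2 * pi)) ` setA"

end

theory Submission
  imports Defs "HOL-Real_Asymp.Real_Asymp"
begin

definition computes :: "recf \<Rightarrow> nat \<Rightarrow> (nat list \<Rightarrow> nat) \<Rightarrow> bool" where
  "computes f k g \<longleftrightarrow> (\<forall>xs. length xs = k \<longrightarrow> eval f xs (g xs))"

lemma computes_Zero: "computes Zero k (\<lambda>_. 0)"
  by (simp add: computes_def eval_Zero)

lemma computes_Proj: "i < k \<Longrightarrow> computes (Proj i) k (\<lambda>xs. xs ! i)"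
  by (simp add: computes_def eval_Proj)

lemma computes_Comp:
  assumes "length gfs = length gs" "\<And>i. i < length gs \<Longrightarrow> computes (gs ! i) k (gfs ! i)"
    "\<And>xs. length xs = k \<Longrightarrow> eval f (map (\<lambda>g. g xs) gfs) (h xs)"
  shows "computes (Comp f gs) k h"
  unfolding computes_def
proof (intro allI impI)
  fix xs :: "nat list" assume l: "length xs = k"
  show "eval (Comp f gs) xs (h xs)"
    by (rule eval_Comp[where ys="map (\<lambda>g. g xs) gfs"]) (use assms l in \<open>auto simp: computes_def\<close>)
qed

lemma computes_Comp1:
  assumes "computes f 1 F" "computes g k G"
  shows "computes (Comp f [g]) k (\<lambda>xs. F [G xs])"
  by (rule computes_Comp[where gfs="[G]"]) (use assms in \<open>auto simp: computes_def\<close>)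

lemma computes_Comp2:
  assumes "computes f 2 F" "computes g k G" "computes h k H"
  shows "computes (Comp f [g, h]) k (\<lambda>xs. F [G xs, H xs])"
  by (rule computes_Comp[where gfs="[G, H]"])
     (use assms in \<open>auto simp: computes_def less_Suc_eq nth_Cons'\<close>)

lemma computes_Comp3:
  assumes "computes f 3 F" "computes g1 k G1" "computes g2 k G2" "computes g3 k G3"
  shows "computes (Comp f [g1, g2, g3]) k (\<lambda>xs. F [G1 xs, G2 xs, G3 xs])"
  by (rule computes_Comp[where gfs="[G1, G2, G3]"])
     (use assms in \<open>auto simp: computes_def less_Suc_eq nth_Cons'\<close>)

fun prec_fn :: "(nat list \<Rightarrow> nat) \<Rightarrow> (nat list \<Rightarrow> nat) \<Rightarrow> nat \<Rightarrow> nat list \<Rightarrow> nat" where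
  "prec_fn g0 g1 0 ys = g0 ys"
| "prec_fn g0 g1 (Suc n) ys = g1 (n # prec_fn g0 g1 n ys # ys)"

lemma computes_Prec:
  assumes "computes f k g0" "computes g k2 g1" "k2 = Suc (Suc k)" "n1 = Suc k"
  shows "computes (Prec f g) n1 (\<lambda>xs. prec_fn g0 g1 (hd xs) (tl xs))"
  unfolding computes_def
proof (intro allI impI)
  fix xs :: "nat list" assume "length xs = n1"
  then obtain n ys where xs: "xs = n # ys" and l: "length ys = k" using assms(4) by (cases xs) auto
  have "eval (Prec f g) (n # ys) (prec_fn g0 g1 n ys)"
  proof (induction n)
    case 0 then show ?case using assms(1) l by (auto simp: computes_def intro: eval_Prec0)
  next
    case (Suc n) then show ?case using assms(2,3) l by (auto simp: computes_def intro: eval_PrecS)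
  qed
  then show "eval (Prec f g) xs (prec_fn g0 g1 (hd xs) (tl xs))" by (simp add: xs)
qed

lemma computes_cong: "computes f k g \<Longrightarrow> (\<And>xs. length xs = k \<Longrightarrow> g xs = h xs) \<Longrightarrow> computes f k h"
  by (simp add: computes_def)

lemma computes_Succ: "computes Succ 1 (\<lambda>xs. Suc (xs ! 0))"
  unfolding computes_def
proof (intro allI impI)
  fix xs :: "nat list" assume "length xs = 1"
  then obtain x where "xs = [x]" by (cases xs) auto
  then show "eval Succ xs (Suc (xs ! 0))" by (simp add: eval_Succ)
qed

fun cn :: "nat \<Rightarrow> recf" where
  "cn 0 = Zero" | "cn (Suc n) = Comp Succ [cn n]"

lemma computes_cn: "computes (cn c) k (\<lambda>_. c)"
proof (induction c)
  case 0 then show ?case by (simp add: computes_Zero)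
next
  case (Suc c)
  show ?case using computes_Comp1[OF computes_Succ Suc] by simp
qed

lemma len1E: "length xs = 1 \<Longrightarrow> (\<And>a. xs = [a] \<Longrightarrow> P) \<Longrightarrow> P"
  by (cases xs) auto
lemma len2E: "length xs = 2 \<Longrightarrow> (\<And>a b. xs = [a, b] \<Longrightarrow> P) \<Longrightarrow> P"
  by (cases xs; cases "tl xs") auto
lemma len3E: "length xs = 3 \<Longrightarrow> (\<And>a b c. xs = [a, b, c] \<Longrightarrow> P) \<Longrightarrow> P"
  by (cases xs; cases "tl xs"; cases "tl (tl xs)") auto

definition r_add :: recf where "r_add = Prec (Proj 0) (Comp Succ [Proj 1])"

lemma computes_add: "computes r_add 2 (\<lambda>xs. xs!0 + xs!1)"
proof -
  have c: "computes r_add 2 (\<lambda>xs. prec_fn (\<lambda>xs. xs ! 0) (\<lambda>xs. Suc ([xs ! 1] ! 0)) (hd xs) (tl xs))"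
    unfolding r_add_def
    by (rule computes_Prec[OF computes_Proj[of 0 1] computes_Comp1[OF computes_Succ computes_Proj]]) auto
  show ?thesis apply (rule computes_cong[OF c]) apply (erule len2E) apply simp
    subgoal for xs a b by (induction a arbitrary: xs) auto done
qed

definition r_mult :: recf where "r_mult = Prec Zero (Comp r_add [Proj 1, Proj 2])"

lemma computes_mult: "computes r_mult 2 (\<lambda>xs. xs!0 * xs!1)"
proof -
  have c: "computes r_mult 2 (\<lambda>xs. prec_fn (\<lambda>_. 0) (\<lambda>xs. xs!1 + xs!2) (hd xs) (tl xs))"
    unfolding r_mult_def
    by (rule computes_Prec[OF computes_Zero[of 1] computes_cong[OF computes_Comp2[OF computes_add computes_Proj[of 1 3] computes_Proj[of 2 3]]]]) auto
  show ?thesis apply (rule computes_cong[OF c]) apply (erule len2E) apply simp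
    subgoal for xs a b by (induction a arbitrary: xs) auto done
qed

definition r_pred :: recf where "r_pred = Prec Zero (Proj 0)"

lemma computes_pred: "computes r_pred 1 (\<lambda>xs. xs!0 - 1)"
proof -
  have c: "computes r_pred 1 (\<lambda>xs. prec_fn (\<lambda>_. 0) (\<lambda>xs. xs!0) (hd xs) (tl xs))"
    unfolding r_pred_def by (rule computes_Prec[OF computes_Zero[of 0] computes_Proj[of 0 2]]) auto
  show ?thesis apply (rule computes_cong[OF c]) apply (erule len1E) apply simp
    subgoal for xs a by (cases a) auto done
qed

definition r_rsub :: recf where "r_rsub = Prec (Proj 0) (Comp r_pred [Proj 1])"
definition r_sub :: recf where "r_sub = Comp r_rsub [Proj 1, Proj 0]"

lemma computes_sub: "computes r_sub 2 (\<lambda>xs. xs!0 - xs!1)"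
proof -
  have c: "computes r_rsub 2 (\<lambda>xs. prec_fn (\<lambda>xs. xs ! 0) (\<lambda>xs. [xs ! 1] ! 0 - 1) (hd xs) (tl xs))"
    unfolding r_rsub_def
    by (rule computes_Prec[OF computes_Proj[of 0 1] computes_Comp1[OF computes_pred computes_Proj[of 1 3]]]) auto
  have "computes r_rsub 2 (\<lambda>xs. xs!1 - xs!0)"
    apply (rule computes_cong[OF c]) apply (erule len2E) apply simp
    subgoal for xs a b by (induction a arbitrary: xs) auto done
  then show ?thesis unfolding r_sub_def
    by (rule computes_cong[OF computes_Comp2[OF _ computes_Proj[of 1 2] computes_Proj[of 0 2]]]) (auto elim: len2E)
qed

definition r_sg :: recf where "r_sg = Prec Zero (cn 1)"

lemma computes_sg: "computes r_sg 1 (\<lambda>xs. if xs!0 = 0 then 0 else 1)"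
proof -
  have c: "computes r_sg 1 (\<lambda>xs. prec_fn (\<lambda>_. 0) (\<lambda>_. 1) (hd xs) (tl xs))"
    unfolding r_sg_def by (rule computes_Prec[OF computes_Zero[of 0] computes_cn[of 1 2]]) auto
  show ?thesis apply (rule computes_cong[OF c]) apply (erule len1E) apply simp
    subgoal for xs a by (cases a) auto done
qed

definition rhs :: "complex \<Rightarrow> complex \<Rightarrow> (nat \<Rightarrow> complex) \<Rightarrow> nat \<Rightarrow> complex" where
  "rhs X z w n = (4*X + 2*z) * w (n+5) - (4*X^2 + 8*X*z + 3*z^2) * w (n+4)
     + (8*X^2*z + 8*X*z^2 + 4*z^3) * w (n+3) - (4*X^2*z^2 + 8*X*z^3 + 3*z^4) * w (n+2)
     + (2*z^5 + 4*X*z^4) * w (n+1) - z^6 * w n"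

definition crec :: "complex \<Rightarrow> complex \<Rightarrow> (nat \<Rightarrow> complex) \<Rightarrow> bool" where
  "crec X z w \<longleftrightarrow> (\<forall>n. w (n+6) = rhs X z w n)"

lemma rhs_lin: "rhs X z (\<lambda>n. c1 * w1 n + c2 * w2 n) n = c1 * rhs X z w1 n + c2 * rhs X z w2 n"
  unfolding rhs_def by (simp add: algebra_simps)

lemma crec_lin: "crec X z w1 \<Longrightarrow> crec X z w2 \<Longrightarrow> crec X z (\<lambda>n. c1 * w1 n + c2 * w2 n)"
  unfolding crec_def rhs_lin by simp

lemma root_id:
  assumes "l = z \<or> l^2 - 2*X*l + z^2 = 0"
  shows "(l::complex)^6 = (4*X + 2*z) * l^5 - (4*X^2 + 8*X*z + 3*z^2) * l^4
     + (8*X^2*z + 8*X*z^2 + 4*z^3) * l^3 - (4*X^2*z^2 + 8*X*z^3 + 3*z^4) * l^2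
     + (2*z^5 + 4*X*z^4) * l - z^6"
proof (cases "l = z")
  case True show ?thesis unfolding True by algebra
next
  case False then have "l^2 - 2*X*l + z^2 = 0" using assms by auto
  then show ?thesis by algebra
qed

lemma root_id2:
  assumes "l = z \<or> l^2 - 2*X*l + z^2 = 0"
  shows "(N+6)*l^6 = (4*X + 2*z) * (N+5)*l^5 - (4*X^2 + 8*X*z + 3*z^2) * (N+4)*l^4
     + (8*X^2*z + 8*X*z^2 + 4*z^3) * (N+3)*l^3 - (4*X^2*z^2 + 8*X*z^3 + 3*z^4) * (N+2)*l^2
     + (2*z^5 + 4*X*z^4) * (N+1)*l - z^6*(N::complex)"
proof (cases "l = z")
  case True show ?thesis unfolding True by algebra
next
  case False then have "l^2 - 2*X*l + z^2 = 0" using assms by auto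
  then show ?thesis by algebra
qed

lemma crec_pow:
  assumes "l = z \<or> l^2 - 2*X*l + z^2 = 0"
  shows "crec X z (\<lambda>n. l ^ n)"
  unfolding crec_def rhs_def
proof
  fix n
  define L where "L = l^n"
  have h: "l^6 * L = ((4*X + 2*z) * l^5 - (4*X^2 + 8*X*z + 3*z^2) * l^4
     + (8*X^2*z + 8*X*z^2 + 4*z^3) * l^3 - (4*X^2*z^2 + 8*X*z^3 + 3*z^4) * l^2
     + (2*z^5 + 4*X*z^4) * l - z^6) * L"
    using root_id[OF assms] by simp
  then show "l ^ (n+6) = (4*X + 2*z) * l ^ (n+5) - (4*X^2 + 8*X*z + 3*z^2) * l ^ (n+4)
     + (8*X^2*z + 8*X*z^2 + 4*z^3) * l ^ (n+3) - (4*X^2*z^2 + 8*X*z^3 + 3*z^4) * l ^ (n+2)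
     + (2*z^5 + 4*X*z^4) * l ^ (n+1) - z^6 * l ^ n"
    unfolding power_add L_def[symmetric] using h by (simp add: algebra_simps)
qed

lemma crec_npow:
  assumes "l = z \<or> l^2 - 2*X*l + z^2 = 0"
  shows "crec X z (\<lambda>n. of_nat n * l ^ n)"
  unfolding crec_def rhs_def
proof
  fix n
  define N where "N = (of_nat n :: complex)"
  define L where "L = l^n"
  have h: "(N+6)*l^6*L = ((4*X + 2*z) * (N+5)*l^5 - (4*X^2 + 8*X*z + 3*z^2) * (N+4)*l^4
     + (8*X^2*z + 8*X*z^2 + 4*z^3) * (N+3)*l^3 - (4*X^2*z^2 + 8*X*z^3 + 3*z^4) * (N+2)*l^2
     + (2*z^5 + 4*X*z^4) * (N+1)*l - z^6*N) * L"
    using root_id2[OF assms, of N] by simp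
  then show "of_nat (n+6) * l ^ (n+6) = (4*X + 2*z) * (of_nat (n+5) * l ^ (n+5)) - (4*X^2 + 8*X*z + 3*z^2) * (of_nat (n+4) * l ^ (n+4))
     + (8*X^2*z + 8*X*z^2 + 4*z^3) * (of_nat (n+3) * l ^ (n+3)) - (4*X^2*z^2 + 8*X*z^3 + 3*z^4) * (of_nat (n+2) * l ^ (n+2))
     + (2*z^5 + 4*X*z^4) * (of_nat (n+1) * l ^ (n+1)) - z^6 * (of_nat n * l ^ n)"
    unfolding power_add of_nat_add N_def[symmetric] L_def[symmetric] using h by (simp add: algebra_simps)
qed

fun gpow :: "int \<Rightarrow> int \<Rightarrow> nat \<Rightarrow> int \<times> int" where
  "gpow X Y 0 = (1, 0)"
| "gpow X Y (Suc m) = (X * fst (gpow X Y m) - Y * snd (gpow X Y m), X * snd (gpow X Y m) + Y * fst (gpow X Y m))"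

lemma gpow_cpx: "Complex (of_int (fst (gpow X Y m))) (of_int (snd (gpow X Y m))) = (Complex (of_int X) (of_int Y)) ^ m"
proof (induction m)
  case 0 then show ?case by (simp add: complex_eq_iff)
next
  case (Suc m)
  show ?case by (simp add: Suc.IH[symmetric] complex_eq_iff)
qed

definition useq :: "int \<Rightarrow> int \<Rightarrow> int \<Rightarrow> int \<Rightarrow> int \<Rightarrow> int \<Rightarrow> nat \<Rightarrow> int" where
  "useq X Y z s C D m = D * int m * (z^m - fst (gpow X Y m)) + s * C * snd (gpow X Y m)"

definition lrs_a :: "int \<Rightarrow> int \<Rightarrow> int list" where
  "lrs_a X z = [4*X + 2*z, - (4*X^2 + 8*X*z + 3*z^2), 8*X^2*z + 8*X*z^2 + 4*z^3,
      - (4*X^2*z^2 + 8*X*z^3 + 3*z^4), 2*z^5 + 4*X*z^4, - (z^6)]"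

lemma useq_cpx:
  fixes X Y z s C D :: int
  defines "b \<equiv> Complex (of_int X) (of_int Y)"
  shows "of_int (useq X Y z s C D m) =
     of_int D * (of_nat m * (of_int z)^m) + ((- (of_int D / 2)) * (of_nat m * b^m) + ((- (of_int D / 2)) * (of_nat m * (cnj b)^m)
     + ((of_int s * of_int C / (2*\<i>)) * b^m + (- (of_int s * of_int C / (2*\<i>))) * (cnj b)^m)))"
proof -
  have bm: "b^m = Complex (of_int (fst (gpow X Y m))) (of_int (snd (gpow X Y m)))"
    using gpow_cpx[of X Y m] unfolding b_def by simp
  have re: "of_int (fst (gpow X Y m)) = (b^m + (cnj b)^m) / 2"
  proof -
    have "(b^m + cnj (b^m)) / 2 = complex_of_real (Re (b^m))"
      by (simp only: complex_add_cnj) simp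
    then have "(b^m + (cnj b)^m) / 2 = complex_of_real (Re (b^m))"
      by (simp only: complex_cnj_power)
    then show ?thesis by (simp add: bm)
  qed
  have im: "of_int (snd (gpow X Y m)) = (b^m - (cnj b)^m) / (2*\<i>)"
  proof -
    have "(b^m - cnj (b^m)) / (2*\<i>) = complex_of_real (Im (b^m))"
      by (simp only: complex_diff_cnj) (simp add: field_simps)
    then have "(b^m - (cnj b)^m) / (2*\<i>) = complex_of_real (Im (b^m))"
      by (simp only: complex_cnj_power)
    then show ?thesis by (simp add: bm)
  qed
  have "of_int (useq X Y z s C D m) = of_int D * of_nat m * ((of_int z)^m - of_int (fst (gpow X Y m))) + of_int s * of_int C * (of_int (snd (gpow X Y m)) :: complex)"
    unfolding useq_def by simp
  also have "\<dots> = of_int D * of_nat m * ((of_int z)^m - (b^m + (cnj b)^m) / 2) + of_int s * of_int C * ((b^m - (cnj b)^m) / (2*\<i>))"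
    by (simp only: re im)
  finally show ?thesis by (simp add: diff_divide_distrib add_divide_distrib algebra_simps)
qed

lemma crec_lin1: "crec X z w1 \<Longrightarrow> crec X z w2 \<Longrightarrow> crec X z (\<lambda>n. c1 * w1 n + w2 n)"
  using crec_lin[of X z w1 w2 c1 1] by simp

lemma crec_useq:
  fixes X Y z s C D :: int
  assumes pyth: "X^2 + Y^2 = z^2"
  shows "crec (of_int X) (of_int z) (\<lambda>n. of_int (useq X Y z s C D n))"
proof -
  define b where "b = Complex (of_int X) (of_int Y)"
  have rb: "b^2 - 2 * of_int X * b + (of_int z)^2 = 0"
  proof -
    have "(of_int z)^2 = (of_int (X^2 + Y^2) :: complex)" using pyth by simp
    then show ?thesis unfolding b_def by (simp add: complex_eq_iff power2_eq_square algebra_simps)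
  qed
  have rcb: "(cnj b)^2 - 2 * of_int X * cnj b + (of_int z)^2 = 0"
  proof -
    have "(of_int z)^2 = (of_int (X^2 + Y^2) :: complex)" using pyth by simp
    then show ?thesis unfolding b_def by (simp add: complex_eq_iff power2_eq_square algebra_simps)
  qed
  have "crec (of_int X) (of_int z) (\<lambda>n. of_int D * (of_nat n * (of_int z)^n) + ((- (of_int D / 2)) * (of_nat n * b^n) + ((- (of_int D / 2)) * (of_nat n * (cnj b)^n)
     + ((of_int s * of_int C / (2*\<i>)) * b^n + (- (of_int s * of_int C / (2*\<i>))) * (cnj b)^n))))"
    by (intro crec_lin1 crec_lin crec_pow crec_npow) (use rb rcb in auto)
  then show ?thesis unfolding useq_cpx b_def .
qed

lemma useq_rec:
  fixes X Y z s C D :: int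
  assumes pyth: "X^2 + Y^2 = z^2"
  defines "u \<equiv> useq X Y z s C D"
  shows "u (n+6) = (4*X + 2*z) * u (n+5) - (4*X^2 + 8*X*z + 3*z^2) * u (n+4)
     + (8*X^2*z + 8*X*z^2 + 4*z^3) * u (n+3) - (4*X^2*z^2 + 8*X*z^3 + 3*z^4) * u (n+2)
     + (2*z^5 + 4*X*z^4) * u (n+1) - z^6 * u n"
proof -
  have "(of_int (u (n+6)) :: complex) = of_int ((4*X + 2*z) * u (n+5) - (4*X^2 + 8*X*z + 3*z^2) * u (n+4)
     + (8*X^2*z + 8*X*z^2 + 4*z^3) * u (n+3) - (4*X^2*z^2 + 8*X*z^3 + 3*z^4) * u (n+2)
     + (2*z^5 + 4*X*z^4) * u (n+1) - z^6 * u n)"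
    using crec_useq[OF pyth, of s C D] unfolding crec_def rhs_def u_def by simp
  then show ?thesis by (simp only: of_int_eq_iff)
qed

lemma useq_LRS:
  fixes X Y z s C D :: int
  assumes pyth: "X^2 + Y^2 = z^2"
  shows "is_LRS (lrs_a X z) (map (useq X Y z s C D) [0..<6]) (useq X Y z s C D)"
  unfolding is_LRS_def
proof (intro conjI allI impI)
  show "length (lrs_a X z) = length (map (useq X Y z s C D) [0..<6])" by (simp add: lrs_a_def)
  show "useq X Y z s C D i = map (useq X Y z s C D) [0..<6] ! i" if "i < length (map (useq X Y z s C D) [0..<6])" for i
    using that by simp
  fix n
  show "useq X Y z s C D (n + length (lrs_a X z)) =
        (\<Sum>j<length (lrs_a X z). lrs_a X z ! j * useq X Y z s C D (n + length (lrs_a X z) - 1 - j))"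
    using useq_rec[OF pyth, of s C D n]
    by (simp add: lrs_a_def eval_nat_numeral lessThan_Suc algebra_simps)
qed

lemma LRS_unique:
  assumes "is_LRS a u0 u" "is_LRS a u0 v"
  shows "u = v"
proof
  fix n show "u n = v n"
  proof (induction n rule: less_induct)
    case (less n)
    show ?case
    proof (cases "n < length a")
      case True then show ?thesis using assms unfolding is_LRS_def by auto
    next
      case False
      then obtain m where m: "n = m + length a" by (metis add.commute le_add_diff_inverse not_less)
      have "u n = (\<Sum>j<length a. a ! j * u (m + length a - 1 - j))"
        using assms(1) m unfolding is_LRS_def by blast
      also have "\<dots> = (\<Sum>j<length a. a ! j * v (m + length a - 1 - j))"
        by (rule sum.cong) (use less m in auto)
      also have "\<dots> = v n"
        using assms(2) m unfolding is_LRS_def by metis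
      finally show ?thesis .
    qed
  qed
qed

lemma fact3_real: "fact 3 = (6::real)"
proof -
  have "(3::nat) = Suc (Suc (Suc 0))" by simp
  then have "fact 3 = (fact (Suc (Suc (Suc 0))) :: real)" by (simp only:)
  also have "\<dots> = 6" by (simp only: fact_Suc fact_0)
  finally show ?thesis .
qed

lemma sin_lower: "\<bar>sin (x::real)\<bar> \<ge> \<bar>x\<bar> * (1 - x^2/6)"
proof -
  have a: "\<bar>sin x - (\<Sum>m<3. sin_coeff m * x ^ m)\<bar> \<le> inverse (fact 3) * \<bar>x\<bar> ^ 3"
    by (rule Maclaurin_sin_bound)
  have b: "(\<Sum>m<3. sin_coeff m * (x::real) ^ m) = x"
  proof -
    have "{..<3::nat} = {0,1,2}" by auto
    then show ?thesis by (simp add: sin_coeff_def)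
  qed
  have c3: "\<bar>x\<bar> ^ 3 = \<bar>x\<bar> * (x::real)^2" by (simp add: power2_eq_square power3_eq_cube abs_mult)
  have "\<bar>sin x - x\<bar> \<le> \<bar>x\<bar> * x^2 / 6" using a unfolding b
  proof -
    have "inverse (fact 3) * \<bar>x\<bar> ^ 3 = \<bar>x\<bar> * x^2 / 6" unfolding c3 fact3_real by (simp add: field_simps)
    then show ?thesis using a unfolding b by linarith
  qed
  moreover have "\<bar>x\<bar> \<le> \<bar>sin x\<bar> + \<bar>sin x - x\<bar>" by linarith
  moreover have "\<bar>x\<bar> * (1 - x^2/6) = \<bar>x\<bar> - \<bar>x\<bar> * x^2 / 6" by (simp add: algebra_simps)
  ultimately show ?thesis by linarith
qed

lemma cos_lower: "cos (x::real) \<ge> 1 - x^2/2"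
proof -
  have "cos x = 1 - 2 * sin (x/2) ^ 2" using cos_double_sin[of "x/2"] by simp
  moreover have "sin (x/2) ^ 2 \<le> (x/2)^2"
    using abs_sin_x_le_abs_x[of "x/2"] by (metis abs_ge_zero power2_abs power_mono)
  ultimately show ?thesis by (simp add: power_divide)
qed

lemma round_nearest: "\<bar>(x::real) - of_int (round x)\<bar> \<le> \<bar>x - of_int (h::int)\<bar>"
proof (cases "h = round x")
  case True then show ?thesis by simp
next
  case False
  then have "\<bar>h - round x\<bar> \<ge> 1" by auto
  then have "\<bar>of_int h - of_int (round x)\<bar> \<ge> (1::real)"
    by (metis of_int_1_le_iff of_int_abs of_int_diff)
  moreover have "\<bar>of_int (round x) - x\<bar> \<le> 1/2" by (rule of_int_round_abs_le)
  ultimately show ?thesis by linarith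
qed

lemma pos_mult_nonneg: "(0::real) < a \<Longrightarrow> 0 \<le> a * b \<Longrightarrow> 0 \<le> b"
  by (simp add: zero_le_mult_iff)
lemma pos_mult_neg: "(0::real) < a \<Longrightarrow> a * b < 0 \<Longrightarrow> b < 0"
  by (simp add: mult_less_0_iff)

locale lsetup =
  fixes X Y z :: int and th :: real
  assumes zpos: "z > 0" and pyth: "X^2 + Y^2 = z^2"
    and costh: "cos th = X / z" and sinth: "sin th = Y / z"
    and nonroot: "\<And>m k. m > 0 \<Longrightarrow> real m * th \<noteq> 2 * pi * of_int k"
begin

definition t :: real where "t = th / (2*pi)"
definition e :: "nat \<Rightarrow> real" where "e m = real m * t - of_int (round (real m * t))"
definition B :: "real \<Rightarrow> nat set" where "B c = {m. 0 < m \<and> real m * \<bar>e m\<bar> < c}"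
definition P :: "real \<Rightarrow> (int \<times> int) set" where
  "P c = {(n, m). m \<noteq> 0 \<and> \<bar>t - of_int n / of_int m\<bar> < c / (of_int m)\<^sup>2}"

lemma gxy: "of_int (fst (gpow X Y m)) = of_int z ^ m * cos (real m * th)"
           "of_int (snd (gpow X Y m)) = of_int z ^ m * sin (real m * th)"
proof -
  have zc: "Complex (of_int X) (of_int Y) = complex_of_real (of_int z) * cis th"
    using zpos costh sinth by (simp add: complex_eq_iff field_simps)
  have "Complex (of_int (fst (gpow X Y m))) (of_int (snd (gpow X Y m))) = complex_of_real (of_int z ^ m) * cis (real m * th)"
    unfolding gpow_cpx zc power_mult_distrib Complex.DeMoivre by simp
  then show "of_int (fst (gpow X Y m)) = of_int z ^ m * cos (real m * th)"
            "of_int (snd (gpow X Y m)) = of_int z ^ m * sin (real m * th)"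
    by (simp_all add: complex_eq_iff)
qed

lemma th_e: "real m * th = 2 * (pi * e m) + (2 * pi) * of_int (round (real m * t))"
  unfolding e_def t_def by (simp add: field_simps)

lemma angle: "cos (real m * th) = cos (2 * (pi * e m))" "sin (real m * th) = sin (2 * (pi * e m))"
  unfolding th_e by (simp_all add: cos_add sin_add)

lemma e_bound: "\<bar>e m\<bar> \<le> 1/2"
  unfolding e_def using of_int_round_abs_le[of "real m * t"] by linarith

lemma x_bound: "\<bar>pi * e m\<bar> \<le> pi / 2"
  using e_bound[of m] pi_gt_zero by (simp add: abs_mult)

lemma e_nz: "m > 0 \<Longrightarrow> e m \<noteq> 0"
proof
  assume "m > 0" "e m = 0"
  then have "real m * th = 2 * pi * of_int (round (real m * t))" using th_e[of m] by simp
  then show False using nonroot[OF \<open>m > 0\<close>] by blast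
qed

lemma useq_sign:
  "real_of_int (useq X Y z s C D m) =
     of_int z ^ m * (2 * sin (pi * e m) * (of_int D * real m * sin (pi * e m) + of_int s * of_int C * cos (pi * e m)))"
proof -
  let ?x = "pi * e m"
  have "real_of_int (useq X Y z s C D m) = of_int D * real m * (of_int z ^ m - of_int (fst (gpow X Y m))) + of_int s * of_int C * of_int (snd (gpow X Y m))"
    unfolding useq_def by simp
  also have "\<dots> = of_int D * real m * (of_int z ^ m - of_int z ^ m * (1 - 2 * sin ?x ^ 2)) + of_int s * of_int C * (of_int z ^ m * (2 * sin ?x * cos ?x))"
    unfolding gxy angle cos_double_sin sin_double by simp
  also have "\<dots> = of_int z ^ m * (2 * sin ?x * (of_int D * real m * sin ?x + of_int s * of_int C * cos ?x))"
    by (simp add: algebra_simps power2_eq_square)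
  finally show ?thesis .
qed


lemma B_finite_III:
  assumes C: "C > 0" and D: "D > 0"
    and N: "\<And>m. m \<ge> N \<Longrightarrow> useq X Y z 1 C D m \<ge> 0 \<and> useq X Y z (-1) C D m \<ge> 0"
    and c': "c' < (of_int C / of_int D) / pi"
  shows "finite (B c')"
proof (rule ccontr)
  assume inf: "infinite (B c')"
  define c where "c = of_int C / (of_int D :: real)"
  have cpos: "c > 0" using C D by (simp add: c_def)
  have c'pos: "c' > 0"
  proof -
    have "B c' \<noteq> {}" using inf by auto
    then obtain m where "m \<in> B c'" by blast
    then have "real m * \<bar>e m\<bar> < c'" unfolding B_def by simp
    moreover have "0 \<le> real m * \<bar>e m\<bar>" by simp
    ultimately show ?thesis by linarith
  qed
  define \<delta> where "\<delta> = 2 * (1 - pi * c' / c)"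
  have "pi * c' < c" using c' pos_less_divide_eq[OF pi_gt_zero, of c' c] unfolding c_def by (simp add: mult.commute)
  then have \<delta>pos: "\<delta> > 0" unfolding \<delta>_def using cpos by (simp add: field_simps)
  obtain M :: nat where M: "real M > (pi * c')^2 / \<delta>" using reals_Archimedean2 by blast
  obtain m where m: "m \<ge> max N (max M 1)" "m \<in> B c'" using inf unfolding infinite_nat_iff_unbounded_le by blast
  define x where "x = pi * e m"
  have mpos: "m > 0" and mB: "real m * \<bar>e m\<bar> < c'" using m unfolding B_def by auto
  have xb: "\<bar>x\<bar> \<le> pi/2" unfolding x_def by (rule x_bound)
  have xnz: "x \<noteq> 0" unfolding x_def using e_nz[OF mpos] by simp
  have sinnz: "sin x \<noteq> 0"
  proof
    assume "sin x = 0"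
    then obtain n :: int where "x = of_int n * pi" by (auto simp: sin_zero_iff_int2)
    moreover have "n \<noteq> 0" using xnz \<open>x = of_int n * pi\<close> by auto
    then have "1 \<le> \<bar>n\<bar>" by linarith
    then have "(1::real) \<le> \<bar>of_int n\<bar>" by (metis of_int_1_le_iff of_int_abs)
    then have "\<bar>x\<bar> \<ge> pi" using pi_gt_zero \<open>x = of_int n * pi\<close> by (simp add: abs_mult)
    then show False using xb pi_gt_zero by linarith
  qed
  have cosnn: "cos x \<ge> 0" using xb by (intro cos_ge_zero) auto
  have zm: "(of_int z :: real) ^ m > 0" using zpos by simp
  have u1: "0 \<le> 2 * sin x * (of_int D * real m * sin x + of_int C * cos x)"
  proof -
    have "0 \<le> useq X Y z 1 C D m" using N[of m] m by auto
    then have "0 \<le> real_of_int (useq X Y z 1 C D m)" by simp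
    then have "0 \<le> of_int z ^ m * (2 * sin x * (of_int D * real m * sin x + of_int 1 * of_int C * cos x))"
      unfolding useq_sign x_def .
    then have "0 \<le> 2 * sin x * (of_int D * real m * sin x + of_int 1 * of_int C * cos x)"
      by (rule pos_mult_nonneg[OF zm])
    then show ?thesis by simp
  qed
  have u2: "0 \<le> 2 * sin x * (of_int D * real m * sin x - of_int C * cos x)"
  proof -
    have "0 \<le> useq X Y z (-1) C D m" using N[of m] m by auto
    then have "0 \<le> real_of_int (useq X Y z (-1) C D m)" by simp
    then have "0 \<le> of_int z ^ m * (2 * sin x * (of_int D * real m * sin x + of_int (-1) * of_int C * cos x))"
      unfolding useq_sign x_def .
    then have "0 \<le> 2 * sin x * (of_int D * real m * sin x + of_int (-1) * of_int C * cos x)"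
      by (rule pos_mult_nonneg[OF zm])
    then show ?thesis by simp
  qed
  have "of_int D * real m * (sin x)^2 \<ge> of_int C * \<bar>sin x\<bar> * cos x"
  proof (cases "sin x > 0")
    case True
    have h: "of_int C * cos x \<le> of_int D * real m * sin x" using u2 True by (simp add: zero_le_mult_iff)
    then have "sin x * (of_int C * cos x) \<le> sin x * (of_int D * real m * sin x)" using True by (intro mult_left_mono) auto
    then show ?thesis using True by (simp add: power2_eq_square algebra_simps)
  next
    case False then have "sin x < 0" using sinnz by linarith
    have h: "of_int C * cos x \<le> - (of_int D * real m * sin x)" using u1 \<open>sin x < 0\<close> by (simp add: zero_le_mult_iff)
    then have "(- sin x) * (of_int C * cos x) \<le> (- sin x) * (- (of_int D * real m * sin x))" using \<open>sin x < 0\<close> by (intro mult_left_mono) auto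
    then show ?thesis using \<open>sin x < 0\<close> by (simp add: power2_eq_square algebra_simps)
  qed
  then have "of_int D * real m * \<bar>sin x\<bar> * \<bar>sin x\<bar> \<ge> of_int C * cos x * \<bar>sin x\<bar>"
    by (simp add: power2_eq_square abs_mult_self_eq algebra_simps)
  then have "of_int D * real m * \<bar>sin x\<bar> \<ge> of_int C * cos x"
    using sinnz by (simp add: mult_le_cancel_right)
  then have "real m * \<bar>sin x\<bar> \<ge> c * cos x" unfolding c_def using D by (simp add: field_simps)
  moreover have "real m * \<bar>x\<bar> \<ge> real m * \<bar>sin x\<bar>" by (simp add: abs_sin_x_le_abs_x mult_left_mono)
  moreover have "c * cos x \<ge> c * (1 - x^2/2)" using cos_lower[of x] cpos by (simp add: mult_left_mono)
  moreover have "real m * \<bar>x\<bar> < pi * c'" unfolding x_def using mB pi_gt_zero by (simp add: abs_mult algebra_simps)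
  ultimately have "c * (1 - x^2/2) < pi * c'" by linarith
  then have xsq: "x^2 > \<delta>" unfolding \<delta>_def using cpos by (simp add: field_simps)
  have "\<bar>x\<bar> < pi * c' / real m" unfolding x_def using mB mpos pi_gt_zero by (simp add: abs_mult field_simps)
  then have "x^2 < (pi * c' / real m)^2"
    using power_strict_mono[of "\<bar>x\<bar>" _ 2] by (simp add: power2_abs)
  then have "x^2 * (real m)^2 < (pi * c')^2" using mpos by (simp add: field_simps power_divide)
  moreover have "\<delta> * (real m)^2 < x^2 * (real m)^2" using xsq mpos by (intro mult_strict_right_mono) auto
  ultimately have "\<delta> * (real m)^2 < (pi * c')^2" by linarith
  moreover have "real m \<le> (real m)^2" using mpos by (simp add: power2_eq_square)
  moreover have "real M \<le> real m" using m by simp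
  moreover have "(pi * c')^2 < \<delta> * real M" using M \<delta>pos by (simp add: field_simps)
  moreover have "\<delta> * real M \<le> \<delta> * (real m)^2"
    using \<delta>pos \<open>real M \<le> real m\<close> \<open>real m \<le> (real m)^2\<close> by (intro mult_left_mono) auto
  ultimately show False by linarith
qed

lemma B_infinite_IV:
  assumes C: "C > 0" and D: "D > 0" and s: "s = 1 \<or> s = -1"
    and nu: "\<And>N. \<exists>m\<ge>N. useq X Y z s C D m < 0"
    and c': "c' > (of_int C / of_int D) / pi"
  shows "infinite (B c')"
  unfolding infinite_nat_iff_unbounded_le
proof
  fix N0
  define c where "c = of_int C / (of_int D :: real)"
  have cpos: "c > 0" using C D by (simp add: c_def)
  have "c < pi * c'" using c' pos_divide_less_eq[OF pi_gt_zero, of c c'] unfolding c_def by (simp add: mult.commute)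
  then have c'pos: "c' > 0" using cpos pi_gt_zero zero_less_mult_pos[of pi c'] by linarith
  define \<delta> where "\<delta> = 6 * (1 - c / (pi * c'))"
  have \<delta>pos: "\<delta> > 0" unfolding \<delta>_def using \<open>c < pi * c'\<close> c'pos pi_gt_zero by (simp add: field_simps)
  obtain M :: nat where M: "real M > 9 * c^2 / \<delta>" using reals_Archimedean2 by blast
  obtain m where m: "m \<ge> max N0 (max M 1)" "useq X Y z s C D m < 0" using nu by blast
  define x where "x = pi * e m"
  have mpos: "m > 0" using m by auto
  have xb: "\<bar>x\<bar> \<le> pi/2" unfolding x_def by (rule x_bound)
  have cosnn: "cos x \<ge> 0" using xb by (intro cos_ge_zero) auto
  have zm: "(of_int z :: real) ^ m > 0" using zpos by simp
  have neg: "2 * sin x * (of_int D * real m * sin x + of_int s * of_int C * cos x) < 0"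
  proof -
    have "real_of_int (useq X Y z s C D m) < 0" using m(2) by simp
    then have "of_int z ^ m * (2 * sin x * (of_int D * real m * sin x + of_int s * of_int C * cos x)) < 0"
      unfolding useq_sign x_def .
    then show ?thesis by (rule pos_mult_neg[OF zm])
  qed
  have Ccos: "0 \<le> of_int C * cos x" using C cosnn by simp
  have key: "of_int D * real m * \<bar>sin x\<bar> < of_int C * cos x"
  proof (cases "sin x > 0")
    case True
    then have "of_int D * real m * sin x + of_int s * of_int C * cos x < 0" using neg by (simp add: mult_less_0_iff)
    then show ?thesis using True s Ccos by (cases "s = 1"; simp add: algebra_simps; linarith)
  next
    case False
    then have "sin x < 0" using neg by (cases "sin x = 0") auto
    then have "of_int D * real m * sin x + of_int s * of_int C * cos x > 0" using neg by (simp add: mult_less_0_iff)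
    then show ?thesis using \<open>sin x < 0\<close> s Ccos by (cases "s = 1"; simp add: algebra_simps; linarith)
  qed
  have "cos x \<le> 1" by simp
  then have "of_int D * real m * \<bar>sin x\<bar> < of_int C" using key C by (smt (verit) mult_left_le of_int_pos)
  then have msin: "real m * \<bar>sin x\<bar> < c" unfolding c_def using D by (simp add: field_simps)
  have x4: "x^2 < 4"
  proof -
    have "\<bar>x\<bar> < 2" using xb pi_less_4 by linarith
    then show ?thesis by (metis abs_ge_zero power2_abs power_strict_mono zero_less_numeral pos2 power2_eq_square
        mult_2 numeral_Bit0 numeral_times_numeral semiring_norm(12) num_double)
  qed
  have lowb: "real m * \<bar>x\<bar> * (1 - x^2/6) \<le> real m * \<bar>sin x\<bar>"
    using sin_lower[of x] by (simp add: mult_left_mono mult.assoc)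
  have "real m * \<bar>x\<bar> * (1/3) \<le> real m * \<bar>x\<bar> * (1 - x^2/6)"
    using x4 by (intro mult_left_mono) auto
  then have "real m * \<bar>x\<bar> < 3 * c" using lowb msin by linarith
  then have "\<bar>x\<bar> < 3 * c / real m" using mpos by (simp add: field_simps)
  then have "x^2 < (3 * c / real m)^2"
    by (metis abs_ge_zero power2_abs power_strict_mono zero_less_numeral pos2)
  also have "\<dots> = 9 * c^2 / (real m)^2" by (simp add: power_divide power_mult_distrib)
  also have "\<dots> \<le> \<delta>"
  proof -
    have "real M \<le> real m" using m by simp
    moreover have "real m \<le> (real m)^2" using mpos by (simp add: power2_eq_square)
    ultimately have "9 * c^2 / \<delta> < (real m)^2" using M by linarith
    then show ?thesis using \<delta>pos mpos by (simp add: field_simps)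
  qed
  finally have "x^2 < \<delta>" .
  then have "1 - x^2/6 > c / (pi * c')" unfolding \<delta>_def by simp
  moreover have "c / (pi * c') > 0" using cpos c'pos pi_gt_zero by simp
  ultimately have "real m * \<bar>x\<bar> * (c / (pi * c')) \<le> real m * \<bar>x\<bar> * (1 - x^2/6)"
    by (intro mult_left_mono) auto
  then have "real m * \<bar>x\<bar> * (c / (pi * c')) < c" using lowb msin by linarith
  then have "real m * \<bar>x\<bar> < pi * c'" using cpos c'pos pi_gt_zero by (simp add: field_simps)
  then have "real m * \<bar>e m\<bar> < c'" unfolding x_def using pi_gt_zero by (simp add: abs_mult field_simps)
  then show "\<exists>n\<ge>N0. n \<in> B c'" using m mpos unfolding B_def by auto
qed


lemma B1_infinite: "infinite (B 1)"
proof
  assume fin: "finite (B 1)"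
  define \<delta> where "\<delta> = Min (insert 1 ((\<lambda>m. \<bar>e m\<bar>) ` B 1))"
  have "\<forall>y \<in> insert 1 ((\<lambda>m. \<bar>e m\<bar>) ` B 1). y > 0"
    using e_nz unfolding B_def by auto
  then have \<delta>pos: "\<delta> > 0" unfolding \<delta>_def using fin by (subst Min_gr_iff) auto
  obtain N :: nat where N: "real N > 1 / \<delta>" using reals_Archimedean2 by blast
  have "1 / \<delta> > 0" using \<delta>pos by simp
  then have Npos: "N > 0" using N by (intro of_nat_less_imp_less[where 'a=real]) linarith
  obtain h k where hk: "0 < k" "k \<le> int N" "\<bar>of_int k * t - of_int h\<bar> < 1 / real N"
    using Dirichlet_approx[OF Npos, of t] by blast
  define m where "m = nat k"
  have mk: "real m = of_int k" "m > 0" using hk unfolding m_def by auto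
  have "\<bar>e m\<bar> \<le> \<bar>real m * t - of_int h\<bar>" unfolding e_def by (rule round_nearest)
  then have em: "\<bar>e m\<bar> < 1 / real N" using hk mk by simp
  have "real m \<le> real N" using hk mk by simp
  have "real m * \<bar>e m\<bar> < real m * (1 / real N)" using em mk by (intro mult_strict_left_mono) auto
  also have "\<dots> \<le> 1" using \<open>real m \<le> real N\<close> Npos by (simp add: field_simps)
  finally have "real m * \<bar>e m\<bar> < 1" .
  then have "m \<in> B 1" using mk unfolding B_def by simp
  then have "\<delta> \<le> \<bar>e m\<bar>" unfolding \<delta>_def using fin by (intro Min_le) auto
  moreover have "1 / real N < \<delta>" using N \<delta>pos Npos by (simp add: field_simps)
  ultimately show False using em by linarith
qed

lemma P_iff_B: "infinite (P c) \<longleftrightarrow> infinite (B c)"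
proof
  assume inf: "infinite (B c)"
  let ?f = "\<lambda>m::nat. (round (real m * t), int m)"
  have "inj_on ?f (B c)" by (auto simp: inj_on_def)
  moreover have "?f ` B c \<subseteq> P c"
  proof
    fix y assume "y \<in> ?f ` B c"
    then obtain m where m: "m \<in> B c" "y = ?f m" by blast
    then have mpos: "m > 0" and mB: "real m * \<bar>e m\<bar> < c" unfolding B_def by auto
    have "\<bar>t - of_int (round (real m * t)) / real m\<bar> = \<bar>e m\<bar> / real m"
      unfolding e_def using mpos by (simp add: field_simps abs_div_pos[symmetric])
    also have "\<dots> < c / (real m)^2" using mB mpos by (simp add: field_simps power2_eq_square)
    finally show "y \<in> P c" using m mpos unfolding P_def by auto
  qed
  ultimately show "infinite (P c)" using inf inj_on_finite by blast
next
  assume inf: "infinite (P c)"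
  show "infinite (B c)"
  proof
    assume fin: "finite (B c)"
    obtain M :: nat where M: "\<forall>m \<in> B c. m \<le> M" using fin by (meson finite_nat_set_iff_bounded_le)
    obtain K :: nat where K: "real K \<ge> real M * \<bar>t\<bar> + \<bar>c\<bar> + 1" using real_arch_simple by blast
    have "P c \<subseteq> {- int K..int K} \<times> {- int M..int M}"
    proof
      fix y assume "y \<in> P c"
      then obtain n m where y: "y = (n, m)" "m \<noteq> 0" "\<bar>t - of_int n / of_int m\<bar> < c / (of_int m)\<^sup>2"
        unfolding P_def by auto
      define j where "j = nat \<bar>m\<bar>"
      have jm: "real j = \<bar>of_int m\<bar>" "j > 0" using y unfolding j_def by auto
      have mpos: "\<bar>(of_int m :: real)\<bar> > 0" using y by simp
      have "of_int m * t - of_int n = of_int m * (t - of_int n / of_int m)" using y by (simp add: field_simps)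
      then have "\<bar>of_int m * t - of_int n\<bar> = \<bar>of_int m\<bar> * \<bar>t - of_int n / of_int m\<bar>"
        by (simp only: abs_mult)
      also have "\<dots> < \<bar>of_int m\<bar> * (c / (of_int m)\<^sup>2)" using y mpos by (intro mult_strict_left_mono) auto
      also have "\<dots> = c / \<bar>of_int m\<bar>"
      proof -
        have "(of_int m :: real)^2 = \<bar>of_int m\<bar> * \<bar>of_int m\<bar>" by (simp add: power2_eq_square)
        then show ?thesis using mpos by (simp add: field_simps)
      qed
      finally have lt: "\<bar>of_int m * t - of_int n\<bar> < c / \<bar>of_int m\<bar>" .
      have "\<exists>n'::int. \<bar>real j * t - of_int n'\<bar> = \<bar>of_int m * t - of_int n\<bar>"
      proof (cases "m > 0")
        case True then show ?thesis using jm by (intro exI[of _ n]) simp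
      next
        case False then have "of_int m = - real j" using jm y by simp
        then have "real j * t - of_int (-n) = - (of_int m * t - of_int n)" by simp
        then show ?thesis by (intro exI[of _ "-n"]) (simp only: abs_minus_cancel)
      qed
      then obtain n' :: int where n': "\<bar>real j * t - of_int n'\<bar> = \<bar>of_int m * t - of_int n\<bar>" by blast
      have "\<bar>e j\<bar> \<le> \<bar>real j * t - of_int n'\<bar>" unfolding e_def by (rule round_nearest)
      then have "\<bar>e j\<bar> < c / real j" using lt n' jm by simp
      then have "real j * \<bar>e j\<bar> < c" using jm by (simp add: field_simps)
      then have "j \<in> B c" using jm unfolding B_def by simp
      then have "j \<le> M" using M by blast
      then have mb: "\<bar>m\<bar> \<le> int M" unfolding j_def by simp
      have "c / \<bar>of_int m\<bar> \<le> \<bar>c\<bar>"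
      proof -
        have "1 \<le> \<bar>(of_int m :: real)\<bar>" using jm by simp
        have "c / \<bar>of_int m\<bar> \<le> \<bar>c\<bar> / \<bar>of_int m\<bar>" by (intro divide_right_mono) auto
        also have "\<dots> \<le> \<bar>c\<bar> / 1" using \<open>1 \<le> \<bar>(of_int m :: real)\<bar>\<close> by (intro divide_left_mono) auto
        finally show ?thesis by simp
      qed
      then have "\<bar>of_int m * t - of_int n\<bar> < \<bar>c\<bar>" using lt by linarith
      moreover have "\<bar>of_int m * t\<bar> \<le> real M * \<bar>t\<bar>"
        using mb by (simp add: abs_mult mult_right_mono)
      ultimately have "\<bar>(of_int n :: real)\<bar> < real K" using K by linarith
      then have "\<bar>n\<bar> \<le> int K" by linarith
      then show "y \<in> {- int K..int K} \<times> {- int M..int M}" using mb y by auto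
    qed
    then have "finite (P c)" by (rule finite_subset) auto
    then show False using inf by simp
  qed
qed


lemma L_def': "lagrange_constant t = Inf {c. infinite (B c)}"
  unfolding lagrange_constant_def using P_iff_B unfolding P_def by simp

lemma SB_pos: "c \<in> {c. infinite (B c)} \<Longrightarrow> c > 0"
proof (rule ccontr)
  assume "c \<in> {c. infinite (B c)}" "\<not> c > 0"
  moreover have "B c = {}"
  proof (intro equals0I)
    fix m assume "m \<in> B c"
    then have "real m * \<bar>e m\<bar> < c" unfolding B_def by simp
    moreover have "0 \<le> real m * \<bar>e m\<bar>" by simp
    ultimately show False using \<open>\<not> c > 0\<close> by linarith
  qed
  ultimately show False by simp
qed

lemma SB_bdd: "bdd_below {c. infinite (B c)}"
  by (rule bdd_belowI[of _ 0]) (use SB_pos in \<open>fastforce\<close>)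

lemma L_le1: "lagrange_constant t \<le> 1"
  unfolding L_def' by (rule cInf_lower) (use B1_infinite SB_bdd in auto)

lemma L_ge0: "lagrange_constant t \<ge> 0"
  unfolding L_def' by (rule cInf_greatest) (use B1_infinite SB_pos in \<open>auto intro: less_imp_le\<close>)

lemma L_lower:
  assumes C: "C > 0" and D: "D > 0"
    and u1: "ultimately_nonneg (useq X Y z 1 C D)" and u2: "ultimately_nonneg (useq X Y z (-1) C D)"
  shows "(of_int C / of_int D) / pi \<le> lagrange_constant t"
proof -
  obtain N1 where N1: "\<forall>n\<ge>N1. useq X Y z 1 C D n \<ge> 0" using u1 unfolding ultimately_nonneg_def by blast
  obtain N2 where N2: "\<forall>n\<ge>N2. useq X Y z (-1) C D n \<ge> 0" using u2 unfolding ultimately_nonneg_def by blast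
  have N: "useq X Y z 1 C D m \<ge> 0 \<and> useq X Y z (-1) C D m \<ge> 0" if "m \<ge> max N1 N2" for m
    using N1 N2 that by auto
  show ?thesis unfolding L_def'
  proof (rule cInf_greatest)
    show "{c. infinite (B c)} \<noteq> {}" using B1_infinite by auto
    fix c' assume "c' \<in> {c. infinite (B c)}"
    then have "infinite (B c')" by simp
    then show "(of_int C / of_int D) / pi \<le> c'" using B_finite_III[OF C D N, where c'=c'] by fastforce
  qed
qed

lemma L_upper:
  assumes C: "C > 0" and D: "D > 0" and s: "s = 1 \<or> s = -1"
    and nu: "\<not> ultimately_nonneg (useq X Y z s C D)"
  shows "lagrange_constant t \<le> (of_int C / of_int D) / pi"
proof (rule ccontr)
  define a where "a = (of_int C / of_int D) / pi"
  assume "\<not> lagrange_constant t \<le> (of_int C / of_int D) / pi"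
  then have la: "a < lagrange_constant t" unfolding a_def by simp
  define c' where "c' = (lagrange_constant t + a) / 2"
  have "c' > a" "c' < lagrange_constant t" using la unfolding c'_def by auto
  have nu': "\<exists>m\<ge>N. useq X Y z s C D m < 0" for N using nu unfolding ultimately_nonneg_def by (meson not_le)
  have "infinite (B c')" using B_infinite_IV[OF C D s nu'] \<open>c' > a\<close> unfolding a_def by blast
  then have "lagrange_constant t \<le> c'" unfolding L_def' by (intro cInf_lower SB_bdd) simp
  then show False using \<open>c' < lagrange_constant t\<close> by simp
qed

end

lemma coprime_sub_mult:
  assumes "coprime (r::int) b" "b dvd y"
  shows "coprime (r^2 - y) b"
proof (rule coprimeI)
  fix c assume c1: "c dvd r^2 - y" and c2: "c dvd b"
  have "c dvd y" using c2 assms(2) by (rule dvd_trans)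
  then have "c dvd (r^2 - y) + y" using c1 by (rule dvd_add[rotated])
  then have "c dvd r^2" by simp
  moreover have "coprime (r^2) b" using assms(1) by simp
  ultimately show "is_unit c" using c2 coprime_common_divisor by blast
qed

lemma not_root_aux:
  fixes g :: complex
  assumes nrm: "Re g ^2 + Im g ^2 = 1" and rat: "2 * Re g \<in> \<rat>" and nint: "2 * Re g \<notin> \<int>"
    and m: "m > 0" "g^m = 1"
  shows False
proof -
  define c where "c k = 2 * Re (g ^ (2^k))" for k
  have cm1: "cmod g = 1" using nrm by (simp add: cmod_def)
  have cn: "Re (g^n)^2 + Im (g^n)^2 = 1" for n
  proof -
    have "cmod (g^n) = 1" using cm1 by (simp add: norm_power)
    then show ?thesis by (simp add: cmod_power2[symmetric])
  qed
  have crec: "c (Suc k) = c k ^ 2 - 2" for k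
  proof -
    define w where "w = g ^ (2^k)"
    have "(2::nat) ^ Suc k = 2^k + 2^k" by simp
    then have "g ^ (2 ^ Suc k) = w * w" unfolding w_def by (simp only: power_add)
    then have "c (Suc k) = 2 * (Re w * Re w - Im w * Im w)" unfolding c_def by simp
    moreover have "Re w ^ 2 + Im w ^ 2 = 1" unfolding w_def by (rule cn)
    moreover have "c k = 2 * Re w" unfolding c_def w_def ..
    ultimately show ?thesis by (simp add: power2_eq_square algebra_simps)
  qed
  have rat0: "c 0 \<in> \<rat>" using rat unfolding c_def by simp
  obtain a b :: int where ab: "b > 0" "coprime a b" "c 0 = of_int a / of_int b"
    using Rats_cases'[OF rat0] by blast
  have b1: "b \<noteq> 1"
  proof
    assume "b = 1"
    then have "c 0 = of_int a" using ab by simp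
    then show False using nint unfolding c_def by simp
  qed
  have ex: "\<exists>r. coprime r b \<and> c k = of_int r / of_int b ^ (2^k)" for k
  proof (induction k)
    case 0 then show ?case using ab by auto
  next
    case (Suc k)
    then obtain r where r: "coprime r b" "c k = of_int r / of_int b ^ (2^k)" by blast
    define K where "K = (2::nat)^k"
    have Kpos: "K > 0" unfolding K_def by simp
    have bK: "(of_int b :: real) ^ K \<noteq> 0" using ab by simp
    have "c (Suc k) = (of_int r / of_int b ^ K)^2 - 2" using crec r unfolding K_def by simp
    also have "\<dots> = of_int (r^2 - 2 * b ^ (2*K)) / of_int b ^ (2*K)"
      using bK by (simp add: field_simps power_mult power2_eq_square)
    finally have "c (Suc k) = of_int (r^2 - 2 * b ^ (2*K)) / of_int b ^ (2^Suc k)" unfolding K_def by (simp add: mult.commute)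
    moreover have "coprime (r^2 - 2 * b ^ (2*K)) b"
    proof (intro coprime_sub_mult[OF r(1)])
      have "b dvd b ^ (2*K)" using Kpos by (intro dvd_power) auto
      then show "b dvd 2 * b ^ (2*K)" by (rule dvd_mult)
    qed
    ultimately show ?case by blast
  qed
  obtain R where R: "\<And>k. coprime (R k) b" "\<And>k. c k = of_int (R k) / of_int b ^ (2^k)"
    using ex by metis
  have inj: "inj c"
  proof (rule injI)
    fix k l assume eq: "c k = c l"
    show "k = l"
    proof (rule ccontr)
      assume "k \<noteq> l"
      have main: "False" if kl: "k < l" "c k = c l" for k l
      proof -
        have "(2::nat)^k < 2^l" using kl by simp
        then obtain d where d: "(2::nat)^l = 2^k + d" "d > 0" by (metis less_imp_add_positive)
        have bpos: "(of_int b :: real) \<noteq> 0" using ab by simp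
        have "of_int (R k) / of_int b ^ (2^k) = (of_int (R l) / of_int b ^ (2^l) :: real)" using kl R by metis
        then have "of_int (R l) = (of_int (R k) * of_int b ^ d :: real)"
          using bpos by (simp add: d power_add field_simps)
        then have "R l = R k * b ^ d" by (metis of_int_eq_iff of_int_mult of_int_power)
        then have "b dvd R l" using d(2) by (simp add: dvd_power)
        then have "is_unit b" using R(1)[of l] coprime_absorb_right by blast
        then show False using ab b1 by simp
      qed
      show False using main[of k l] main[of l k] eq \<open>k \<noteq> l\<close> by (metis linorder_neqE_nat)
    qed
  qed
  have gmod: "g ^ n = g ^ (n mod m)" for n
  proof -
    have "g ^ n = g ^ (m * (n div m) + n mod m)" by simp
    also have "\<dots> = (g ^ m) ^ (n div m) * g ^ (n mod m)" by (simp only: power_add power_mult)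
    finally show ?thesis using m by simp
  qed
  have "range c \<subseteq> (\<lambda>j. 2 * Re (g ^ j)) ` {..<m}"
  proof
    fix y assume "y \<in> range c"
    then obtain k where "y = c k" by blast
    then have "y = 2 * Re (g ^ (2^k mod m))" unfolding c_def using gmod by metis
    then show "y \<in> (\<lambda>j. 2 * Re (g ^ j)) ` {..<m}" using m by auto
  qed
  then have "finite (range c)" by (rule finite_subset) auto
  then have "finite (UNIV :: nat set)" using inj by (rule finite_imageD)
  then show False by simp
qed


lemma int_sq_small: "(k::int) \<noteq> 0 \<Longrightarrow> k^2 < 4 \<Longrightarrow> k^2 = 1"
proof -
  assume k0: "k \<noteq> 0" and k4: "k^2 < 4"
  have "\<bar>k\<bar> < 2"
  proof (rule ccontr)
    assume "\<not> \<bar>k\<bar> < 2"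
    then have "2 * 2 \<le> \<bar>k\<bar> * \<bar>k\<bar>" by (intro mult_mono) auto
    then show False using k4 by (simp add: power2_eq_square abs_mult[symmetric])
  qed
  then have "\<bar>k\<bar> = 1" using k0 by linarith
  then show ?thesis by (metis abs_power2 power2_abs one_power2)
qed

lemma half_int_case:
  fixes p q :: real
  assumes "p^2 + q^2 = 1" "p \<noteq> 0" "q \<noteq> 0" "2 * p \<in> \<int>"
  shows "2 * q \<notin> \<int>"
proof
  assume "2 * q \<in> \<int>"
  then obtain l where l: "2 * q = of_int l" by (metis Ints_cases)
  obtain k where k: "2 * p = of_int k" using assms(4) by (metis Ints_cases)
  have "(2*p)^2 + (2*q)^2 = 4 * (p^2 + q^2)" by (simp add: power_mult_distrib)
  then have "(2*p)^2 + (2*q)^2 = 4" using assms(1) by simp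
  then have "(of_int (k^2 + l^2) :: real) = of_int 4" unfolding k l by simp
  then have s4: "k^2 + l^2 = 4" by (simp only: of_int_eq_iff)
  have "k \<noteq> 0" "l \<noteq> 0" using k l assms by auto
  then have "k^2 > 0" "l^2 > 0" by auto
  then have "k^2 < 4" "l^2 < 4" using s4 by linarith+
  then have "k^2 = 1" "l^2 = 1" using int_sq_small \<open>k \<noteq> 0\<close> \<open>l \<noteq> 0\<close> by auto
  then show False using s4 by simp
qed

lemma alpha_not_root:
  fixes p q :: real
  assumes pq: "p \<in> \<rat>" "q \<in> \<rat>" "p^2 + q^2 = 1" "p \<noteq> 0" "q \<noteq> 0" and m: "m > 0"
  shows "Complex p q ^ m \<noteq> 1"
proof
  assume root: "Complex p q ^ m = 1"
  show False
  proof (cases "2 * p \<in> \<int>")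
    case False
    then show False using not_root_aux[of "Complex p q" m] pq m root by auto
  next
    case True
    then have nq: "2 * q \<notin> \<int>" using half_int_case pq by blast
    have "2 * (- q) \<notin> \<int>" using nq by (metis Ints_minus minus_minus mult_minus_right)
    moreover have "(\<i> * Complex p q) ^ (4*m) = 1"
    proof -
      have i4: "\<i> ^ (4*m) = 1" by (simp add: power_mult)
      have "Complex p q ^ (4*m) = (Complex p q ^ m) ^ 4" by (simp add: power_mult[symmetric] mult.commute)
      then have "Complex p q ^ (4*m) = 1" using root by simp
      then show ?thesis using i4 by (simp add: power_mult_distrib)
    qed
    moreover have "\<i> * Complex p q = Complex (- q) p" by (simp add: complex_eq_iff)
    ultimately show False using not_root_aux[of "Complex (-q) p" "4*m"] pq m by (auto simp: add.commute)
  qed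
qed

lemma setA_setup:
  assumes "alpha \<in> setA"
  obtains X Y z where "lsetup X Y z (Arg alpha)"
proof -
  obtain p q where pq: "alpha = Complex p q" "p \<in> \<rat>" "q \<in> \<rat>" "p^2 + q^2 = 1" "p \<noteq> 0" "q \<noteq> 0"
    using assms unfolding setA_def by blast
  have "cmod alpha = 1" using pq by (simp add: cmod_def)
  moreover have "alpha \<noteq> 0" using pq by (simp add: complex_eq_iff)
  ultimately have ca: "cis (Arg alpha) = alpha" using cis_Arg[of alpha] by (auto simp: sgn_div_norm)
  then have cs: "cos (Arg alpha) = p" "sin (Arg alpha) = q" using pq by (auto simp: complex_eq_iff)
  obtain a1 b1 :: int where 1: "b1 > 0" "p = of_int a1 / of_int b1" using Rats_cases'[OF pq(2)] by blast
  obtain a2 b2 :: int where 2: "b2 > 0" "q = of_int a2 / of_int b2" using Rats_cases'[OF pq(3)] by blast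
  define z where "z = b1 * b2"
  define X where "X = a1 * b2"
  define Y where "Y = a2 * b1"
  have zpos: "z > 0" unfolding z_def using 1 2 by simp
  have pX: "p = of_int X / of_int z" and qY: "q = of_int Y / of_int z"
    unfolding X_def Y_def z_def using 1 2 by (auto simp: field_simps)
  have "(of_int (X^2 + Y^2) :: real) = of_int (z^2) * (p^2 + q^2)"
    using zpos unfolding pX qY by (simp add: field_simps power2_eq_square)
  then have pyth: "X^2 + Y^2 = z^2" using pq(4) by (metis mult.right_neutral of_int_eq_iff)
  have nonroot: "real m * Arg alpha \<noteq> 2 * pi * of_int k" if "m > 0" for m k
  proof
    assume eq: "real m * Arg alpha = 2 * pi * of_int k"
    have "alpha ^ m = cis (real m * Arg alpha)" using ca by (metis Complex.DeMoivre)
    also have "\<dots> = 1" unfolding eq by simp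
    finally show False using alpha_not_root[OF pq(2-6) that] pq(1) by simp
  qed
  show ?thesis
    by (rule that, unfold_locales) (use zpos pyth cs pX qY nonroot in auto)
qed

fun pden :: "nat \<Rightarrow> nat" where
  "pden 0 = 1" | "pden (Suc n) = pden n * (2*n+1)"
fun pnum :: "nat \<Rightarrow> nat" where
  "pnum 0 = 0"
| "pnum (Suc n) = (if even n then pnum n * (2*n+1) + pden n else pnum n * (2*n+1) - pden n)"

definition ps :: "nat \<Rightarrow> real" where "ps N = (\<Sum>k<N. (-1)^k / real (2*k+1))"

lemma pden_pos: "pden n > 0" by (induction n) auto

lemma ps_even_nonneg: "ps (2*n) \<ge> 0"
proof (induction n)
  case 0 then show ?case by (simp add: ps_def)
next
  case (Suc n)
  have m1: "(-1::real)^(2*n) = 1" by (simp add: power_mult)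
  have "ps (2 * Suc n) = ps (2*n) + (-1)^(2*n) / real (2*(2*n)+1) + (-1)^(Suc (2*n)) / real (2*(Suc (2*n))+1)"
    by (simp add: ps_def)
  also have "\<dots> = ps (2*n) + (1 / real (4*n+1) - 1 / real (4*n+3))"
    using m1 by (simp add: algebra_simps)
  finally have "ps (2 * Suc n) = ps (2*n) + (1 / real (4*n+1) - 1 / real (4*n+3))" .
  moreover have "1 / real (4*n+3) \<le> 1 / real (4*n+1)" by (simp add: frac_le)
  ultimately show ?case using Suc by linarith
qed

lemma ps_nonneg: "ps N \<ge> 0"
proof (cases "even N")
  case True then obtain n where "N = 2*n" by blast
  then show ?thesis using ps_even_nonneg by simp
next
  case False then obtain n where n: "N = Suc (2*n)" by (metis oddE Suc_eq_plus1)
  have "ps N = ps (2*n) + 1 / real (4*n+1)" unfolding n by (simp add: ps_def)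
  then show ?thesis using ps_even_nonneg[of n] by simp
qed

lemma pnum_eq: "real (pnum N) = ps N * real (pden N)"
proof (induction N)
  case 0 then show ?case by (simp add: ps_def)
next
  case (Suc n)
  have psS: "ps (Suc n) = ps n + (-1)^n / real (2*n+1)" by (simp add: ps_def)
  show ?case
  proof (cases "even n")
    case True
    then have "ps (Suc n) = ps n + 1 / real (2*n+1)" using psS by simp
    then have h: "ps n * real (2*n+1) + 1 = ps (Suc n) * real (2*n+1)" by (simp add: field_simps)
    have "real (pnum (Suc n)) = real (pnum n) * real (2*n+1) + real (pden n)" using True by (simp add: algebra_simps)
    also have "\<dots> = (ps n * real (2*n+1) + 1) * real (pden n)" using Suc by (simp add: algebra_simps)
    also have "\<dots> = (ps (Suc n) * real (2*n+1)) * real (pden n)" by (simp only: h)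
    also have "\<dots> = ps (Suc n) * real (pden (Suc n))" by (simp add: algebra_simps)
    finally show ?thesis .
  next
    case False
    then have "ps (Suc n) = ps n - 1 / real (2*n+1)" using psS by simp
    then have h: "ps n * real (2*n+1) - 1 = ps (Suc n) * real (2*n+1)" by (simp add: field_simps)
    have "real (pnum n * (2*n+1)) - real (pden n) = (ps n * real (2*n+1) - 1) * real (pden n)"
      using Suc by (simp add: algebra_simps)
    also have "\<dots> = (ps (Suc n) * real (2*n+1)) * real (pden n)" by (simp only: h)
    also have "\<dots> = ps (Suc n) * real (pden (Suc n))" by (simp add: algebra_simps)
    finally have eq: "ps (Suc n) * real (pden (Suc n)) = real (pnum n * (2*n+1)) - real (pden n)" by simp
    have "ps (Suc n) * real (pden (Suc n)) \<ge> 0" using ps_nonneg by simp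
    then have "real (pden n) \<le> real (pnum n * (2*n+1))" using eq by linarith
    then have le: "pden n \<le> pnum n * (2*n+1)" by (simp only: of_nat_le_iff)
    show ?thesis using False eq le by (simp add: of_nat_diff)
  qed
qed

lemma pi_approx:
  "ps (2*M) \<le> pi / 4" "pi / 4 \<le> ps (2*M) + 1 / real (4*M+1)"
proof -
  define a where "a i = 1 / real (i*2+1)" for i :: nat
  have a0: "a \<longlonglongrightarrow> 0" unfolding a_def by real_asymp
  have L: "summable (\<lambda>n. (-1)^n * a n)"
       "\<And>n. (\<Sum>i<2*n. (-1)^i * a i) \<le> (\<Sum>i. (-1)^i * a i)"
       "\<And>n. (\<Sum>i. (-1)^i * a i) \<le> (\<Sum>i<2*n+1. (-1)^i * a i)"
    using summable_Leibniz'[OF a0] unfolding a_def by (auto simp: frac_le)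
  have s: "(\<Sum>i. (-1)^i * a i) = pi / 4" unfolding pi_series a_def by simp
  have p: "(\<Sum>i<N. (-1)^i * a i) = ps N" for N unfolding ps_def a_def by (simp add: mult.commute)
  show "ps (2*M) \<le> pi / 4" using L(2)[of M] unfolding s p .
  have "(\<Sum>i<2*M+1. (-1)^i * a i) = ps (2*M) + 1 / real (4*M+1)" unfolding p by (simp add: ps_def mult.commute)
  then show "pi / 4 \<le> ps (2*M) + 1 / real (4*M+1)" using L(3)[of M] unfolding s by simp
qed

definition rAdd :: "recf \<Rightarrow> recf \<Rightarrow> recf" where "rAdd g h = Comp r_add [g, h]"
definition rMul :: "recf \<Rightarrow> recf \<Rightarrow> recf" where "rMul g h = Comp r_mult [g, h]"
definition rSub :: "recf \<Rightarrow> recf \<Rightarrow> recf" where "rSub g h = Comp r_sub [g, h]"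
definition rSg :: "recf \<Rightarrow> recf" where "rSg g = Comp r_sg [g]"
definition rSuc :: "recf \<Rightarrow> recf" where "rSuc g = Comp Succ [g]"

lemma c_add: "computes g k G \<Longrightarrow> computes h k H \<Longrightarrow> computes (rAdd g h) k (\<lambda>xs. G xs + H xs)"
  unfolding rAdd_def by (rule computes_cong[OF computes_Comp2[OF computes_add]]) auto
lemma c_mul: "computes g k G \<Longrightarrow> computes h k H \<Longrightarrow> computes (rMul g h) k (\<lambda>xs. G xs * H xs)"
  unfolding rMul_def by (rule computes_cong[OF computes_Comp2[OF computes_mult]]) auto
lemma c_sub: "computes g k G \<Longrightarrow> computes h k H \<Longrightarrow> computes (rSub g h) k (\<lambda>xs. G xs - H xs)"
  unfolding rSub_def by (rule computes_cong[OF computes_Comp2[OF computes_sub]]) auto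
lemma c_sg: "computes g k G \<Longrightarrow> computes (rSg g) k (\<lambda>xs. if G xs = 0 then 0 else 1)"
  unfolding rSg_def by (rule computes_cong[OF computes_Comp1[OF computes_sg]]) auto
lemma c_suc: "computes g k G \<Longrightarrow> computes (rSuc g) k (\<lambda>xs. Suc (G xs))"
  unfolding rSuc_def by (rule computes_cong[OF computes_Comp1[OF computes_Succ]]) auto
lemma c_proj: "i < k \<Longrightarrow> computes (Proj i) k (\<lambda>xs. xs ! i)"
  by (rule computes_Proj)
lemma c_cn: "computes (cn c) k (\<lambda>_. c)"
  by (rule computes_cn)

lemmas c_rules = c_add c_mul c_sub c_sg c_suc c_cn

definition r_tri :: recf where "r_tri = Prec Zero (rAdd (Proj 1) (rSuc (Proj 0)))"

lemma computes_tri: "computes r_tri 1 (\<lambda>xs. triangle (xs!0))"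
proof -
  have c: "computes r_tri 1 (\<lambda>xs. prec_fn (\<lambda>_. 0) (\<lambda>xs. xs!1 + Suc (xs!0)) (hd xs) (tl xs))"
    unfolding r_tri_def
    by (rule computes_Prec[OF computes_Zero[of 0] c_add[OF c_proj c_suc[OF c_proj]]]) auto
  show ?thesis apply (rule computes_cong[OF c]) apply (erule len1E) apply simp
    subgoal for xs a by (induction a arbitrary: xs) auto done
qed

lemma c_tri: "computes g k G \<Longrightarrow> computes (Comp r_tri [g]) k (\<lambda>xs. triangle (G xs))"
  by (rule computes_cong[OF computes_Comp1[OF computes_tri]]) auto

definition r_penc :: recf where "r_penc = rAdd (Comp r_tri [rAdd (Proj 0) (Proj 1)]) (Proj 0)"

lemma computes_penc: "computes r_penc 2 (\<lambda>xs. prod_encode (xs!0, xs!1))"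
proof -
  have "computes r_penc 2 (\<lambda>xs. triangle (xs!0 + xs!1) + xs!0)"
    unfolding r_penc_def by (intro c_add c_tri c_proj) auto
  then show ?thesis by (simp add: prod_encode_def)
qed

lemma int_encode_diff: "int_encode (int x - int y) = 2 * (x - y) + (2 * (y - x) - 1)"
  by (simp add: int_encode_def sum_encode_def nat_diff_distrib) linarith

definition r_encd :: "recf \<Rightarrow> recf \<Rightarrow> recf" where
  "r_encd g h = rAdd (rMul (cn 2) (rSub g h)) (rSub (rMul (cn 2) (rSub h g)) (cn 1))"

lemma c_encd: "computes g k G \<Longrightarrow> computes h k H \<Longrightarrow> computes (r_encd g h) k (\<lambda>xs. int_encode (int (G xs) - int (H xs)))"
  unfolding r_encd_def int_encode_diff by (intro c_rules)


lemma computes_Comp_la: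
  assumes "list_all2 (\<lambda>g G. computes g k G) gs gfs"
    "\<And>xs. length xs = k \<Longrightarrow> eval f (map (\<lambda>G. G xs) gfs) (h xs)"
  shows "computes (Comp f gs) k h"
  by (rule computes_Comp[where gfs=gfs])
     (use assms in \<open>auto dest: list_all2_lengthD list_all2_nthD\<close>)

definition r_den :: recf where "r_den = Prec (cn 1) (rMul (Proj 1) (rSuc (rMul (cn 2) (Proj 0))))"

lemma computes_den: "computes r_den 1 (\<lambda>xs. pden (xs!0))"
proof -
  have c: "computes r_den 1 (\<lambda>xs. prec_fn (\<lambda>_. 1) (\<lambda>xs. xs!1 * Suc (2 * xs!0)) (hd xs) (tl xs))"
    unfolding r_den_def
    by (rule computes_Prec[OF c_cn c_mul[OF c_proj c_suc[OF c_mul[OF c_cn c_proj]]]]) auto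
  show ?thesis apply (rule computes_cong[OF c]) apply (erule len1E) apply simp
    subgoal for xs a by (induction a arbitrary: xs) auto done
qed

definition r_par :: recf where "r_par = Prec Zero (rSub (cn 1) (Proj 1))"

lemma computes_par: "computes r_par 1 (\<lambda>xs. (xs!0) mod 2)"
proof -
  have c: "computes r_par 1 (\<lambda>xs. prec_fn (\<lambda>_. 0) (\<lambda>xs. 1 - xs!1) (hd xs) (tl xs))"
    unfolding r_par_def
    by (rule computes_Prec[OF computes_Zero[of 0] c_sub[OF c_cn c_proj]]) auto
  show ?thesis apply (rule computes_cong[OF c]) apply (erule len1E) apply simp
    subgoal for xs a by (induction a arbitrary: xs) (auto simp: mod_Suc) done
qed

definition r_num :: recf where
  "r_num = Prec Zero (rSub (rAdd (rMul (Proj 1) (rSuc (rMul (cn 2) (Proj 0))))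
                               (rMul (rSub (cn 1) (Comp r_par [Proj 0])) (Comp r_den [Proj 0])))
                         (rMul (Comp r_par [Proj 0]) (Comp r_den [Proj 0])))"

lemma c_un: "computes f 1 (\<lambda>xs. \<phi> (xs!0)) \<Longrightarrow> computes g k G \<Longrightarrow> computes (Comp f [g]) k (\<lambda>xs. \<phi> (G xs))"
  by (rule computes_cong[OF computes_Comp1]) auto

lemma computes_num: "computes r_num 1 (\<lambda>xs. pnum (xs!0))"
proof -
  have c: "computes r_num 1 (\<lambda>xs. prec_fn (\<lambda>_. 0)
     (\<lambda>xs. (xs!1 * Suc (2 * xs!0) + (1 - xs!0 mod 2) * pden (xs!0)) - (xs!0 mod 2) * pden (xs!0)) (hd xs) (tl xs))"
    unfolding r_num_def
    by (rule computes_Prec[OF computes_Zero[of 0]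
          c_sub[OF c_add[OF c_mul[OF c_proj c_suc[OF c_mul[OF c_cn c_proj]]]
                            c_mul[OF c_sub[OF c_cn c_un[OF computes_par c_proj]] c_un[OF computes_den c_proj]]]
                   c_mul[OF c_un[OF computes_par c_proj] c_un[OF computes_den c_proj]]]]) auto
  show ?thesis apply (rule computes_cong[OF c]) apply (erule len1E) apply simp
    subgoal for xs a by (induction a arbitrary: xs) (auto elim: oddE) done
qed

fun bestf :: "(nat \<Rightarrow> nat \<Rightarrow> nat) \<Rightarrow> nat \<Rightarrow> nat \<Rightarrow> nat" where
  "bestf R K 0 = 0"
| "bestf R K (Suc j) = (if R (Suc j) K = 0 then bestf R K j else Suc j)"

definition r_best :: "recf \<Rightarrow> recf" where
  "r_best Rr = Prec Zero (rAdd (rMul (rSg (Comp Rr [rSuc (Proj 0), Proj 2])) (rSuc (Proj 0)))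
                               (rMul (rSub (cn 1) (rSg (Comp Rr [rSuc (Proj 0), Proj 2]))) (Proj 1)))"

lemma c_bin: "computes f 2 (\<lambda>xs. \<phi> (xs!0) (xs!1)) \<Longrightarrow> computes g k G \<Longrightarrow> computes h k H \<Longrightarrow>
   computes (Comp f [g, h]) k (\<lambda>xs. \<phi> (G xs) (H xs))"
  by (rule computes_cong[OF computes_Comp2]) auto

lemma computes_best:
  assumes R: "computes Rr 2 (\<lambda>xs. R (xs!0) (xs!1))"
  shows "computes (r_best Rr) 2 (\<lambda>xs. bestf R (xs!1) (xs!0))"
proof -
  have c: "computes (r_best Rr) 2 (\<lambda>xs. prec_fn (\<lambda>_. 0)
     (\<lambda>xs. (if R (Suc (xs!0)) (xs!2) = 0 then 0 else 1) * Suc (xs!0) + (1 - (if R (Suc (xs!0)) (xs!2) = 0 then 0 else 1)) * xs!1) (hd xs) (tl xs))"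
    unfolding r_best_def
    by (rule computes_Prec[OF computes_Zero[of 1]
          c_add[OF c_mul[OF c_sg[OF c_bin[OF R c_suc[OF c_proj] c_proj]] c_suc[OF c_proj]]
                   c_mul[OF c_sub[OF c_cn c_sg[OF c_bin[OF R c_suc[OF c_proj] c_proj]]] c_proj]]]) auto
  show ?thesis apply (rule computes_cong[OF c]) apply (erule len2E) apply simp
    subgoal for xs a b by (induction a arbitrary: xs) auto done
qed

lemma bestf_spec:
  "bestf R K J \<le> J \<and> (bestf R K J = 0 \<or> R (bestf R K J) K \<noteq> 0) \<and> (\<forall>i. bestf R K J < i \<and> i \<le> J \<longrightarrow> R i K = 0)"
proof (induction J)
  case 0 then show ?case by simp
next
  case (Suc J) then show ?case by (auto simp: le_Suc_eq)
qed

definition dspec :: "recf \<Rightarrow> bool" where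
  "dspec d \<longleftrightarrow> (\<forall>a u0 :: int list.
      length a = 6 \<longrightarrow> length u0 = 6 \<longrightarrow> a ! 5 \<noteq> 0 \<longrightarrow>
      (\<exists>r. eval d (map int_encode (a @ u0)) r \<and>
          (r \<noteq> 0 \<longleftrightarrow> (\<forall>u. is_LRS a u0 u \<longrightarrow> ultimately_nonneg u))))"

definition dv :: "recf \<Rightarrow> int list \<Rightarrow> int list \<Rightarrow> nat" where
  "dv d a u0 = (SOME r. eval d (map int_encode (a @ u0)) r \<and>
          (r \<noteq> 0 \<longleftrightarrow> (\<forall>u. is_LRS a u0 u \<longrightarrow> ultimately_nonneg u)))"

lemma dv_spec:
  assumes "dspec d" "length a = 6" "length u0 = 6" "a ! 5 \<noteq> 0"
  shows "eval d (map int_encode (a @ u0)) (dv d a u0) \<and>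
          (dv d a u0 \<noteq> 0 \<longleftrightarrow> (\<forall>u. is_LRS a u0 u \<longrightarrow> ultimately_nonneg u))"
  unfolding dv_def by (rule someI_ex) (use assms in \<open>auto simp: dspec_def\<close>)

definition Au :: "int \<Rightarrow> int \<Rightarrow> int \<Rightarrow> nat \<Rightarrow> nat" where
  "Au X Y z m = nat (int m * (z^m - fst (gpow X Y m)))"
definition Bp :: "int \<Rightarrow> int \<Rightarrow> int \<Rightarrow> nat \<Rightarrow> nat" where
  "Bp X Y s m = nat (max (s * snd (gpow X Y m)) 0)"
definition Bn :: "int \<Rightarrow> int \<Rightarrow> int \<Rightarrow> nat \<Rightarrow> nat" where
  "Bn X Y s m = nat (max (- (s * snd (gpow X Y m))) 0)"

definition r_uterm :: "int \<Rightarrow> int \<Rightarrow> int \<Rightarrow> int \<Rightarrow> nat \<Rightarrow> recf" where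
  "r_uterm X Y z s m = r_encd (rAdd (rMul (Proj 1) (cn (Au X Y z m))) (rMul (Proj 0) (cn (Bp X Y s m))))
                              (rMul (Proj 0) (cn (Bn X Y s m)))"

definition r_Q :: "recf \<Rightarrow> int \<Rightarrow> int \<Rightarrow> int \<Rightarrow> int \<Rightarrow> recf" where
  "r_Q d X Y z s = Comp d (map cn (map int_encode (lrs_a X z)) @ map (r_uterm X Y z s) [0..<6])"

definition r_R :: "recf \<Rightarrow> int \<Rightarrow> int \<Rightarrow> int \<Rightarrow> recf" where
  "r_R d X Y z = rMul (r_Q d X Y z 1) (r_Q d X Y z (-1))"

context lsetup
begin

lemma gx_le: "fst (gpow X Y m) \<le> z^m"
proof -
  have "real_of_int (fst (gpow X Y m)) = of_int z ^ m * cos (real m * th)" by (rule gxy)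
  also have "\<dots> \<le> of_int z ^ m * 1" using zpos by (intro mult_left_mono) auto
  finally show ?thesis by (metis mult.right_neutral of_int_le_iff of_int_power)
qed

lemma useq_split:
  "useq X Y z s (int j) (int K) m = int (K * Au X Y z m + j * Bp X Y s m) - int (j * Bn X Y s m)"
proof -
  have A: "int (Au X Y z m) = int m * (z^m - fst (gpow X Y m))" unfolding Au_def using gx_le[of m] by simp
  have B: "s * snd (gpow X Y m) = int (Bp X Y s m) - int (Bn X Y s m)" unfolding Bp_def Bn_def by auto
  have "useq X Y z s (int j) (int K) m = int K * (int m * (z^m - fst (gpow X Y m))) + int j * (s * snd (gpow X Y m))"
    unfolding useq_def by (simp add: algebra_simps)
  also have "\<dots> = int K * int (Au X Y z m) + int j * (int (Bp X Y s m) - int (Bn X Y s m))"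
    by (simp only: A B)
  finally show ?thesis by (simp add: algebra_simps)
qed

lemma computes_uterm:
  "computes (r_uterm X Y z s m) 2 (\<lambda>xs. int_encode (useq X Y z s (int (xs!0)) (int (xs!1)) m))"
proof -
  have "computes (r_uterm X Y z s m) 2 (\<lambda>xs. int_encode (int (xs!1 * Au X Y z m + xs!0 * Bp X Y s m) - int (xs!0 * Bn X Y s m)))"
    unfolding r_uterm_def by (intro c_encd c_add c_mul c_proj c_cn) auto
  then show ?thesis by (simp add: useq_split)
qed

lemma computes_uterm':
  "computes (r_uterm X Y z s m) 2 (\<lambda>xs. int_encode (useq X Y z s (int (xs!0)) (int (xs!Suc 0)) m))"
  using computes_uterm by simp

lemma lrs_a_ok: "length (lrs_a X z) = 6" "lrs_a X z ! 5 \<noteq> 0"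
  using zpos by (auto simp: lrs_a_def)

lemma dv_iff:
  assumes "dspec d"
  shows "dv d (lrs_a X z) (map (useq X Y z s C D) [0..<6]) \<noteq> 0 \<longleftrightarrow> ultimately_nonneg (useq X Y z s C D)"
proof -
  have "dv d (lrs_a X z) (map (useq X Y z s C D) [0..<6]) \<noteq> 0 \<longleftrightarrow>
        (\<forall>u. is_LRS (lrs_a X z) (map (useq X Y z s C D) [0..<6]) u \<longrightarrow> ultimately_nonneg u)"
    using dv_spec[OF assms lrs_a_ok(1) _ lrs_a_ok(2)] by simp
  also have "\<dots> \<longleftrightarrow> ultimately_nonneg (useq X Y z s C D)"
    using useq_LRS[OF pyth] LRS_unique by metis
  finally show ?thesis .
qed

lemma computes_Q:
  assumes "dspec d"
  shows "computes (r_Q d X Y z s) 2 (\<lambda>xs. dv d (lrs_a X z) (map (useq X Y z s (int (xs!0)) (int (xs!1))) [0..<6]))"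
  unfolding r_Q_def
proof (rule computes_Comp_la[where gfs = "map (\<lambda>c. \<lambda>_. c) (map int_encode (lrs_a X z)) @
      map (\<lambda>m xs. int_encode (useq X Y z s (int (xs!0)) (int (xs!1)) m)) [0..<6]"])
  show "list_all2 (\<lambda>g G. computes g 2 G) (map cn (map int_encode (lrs_a X z)) @ map (r_uterm X Y z s) [0..<6])
     (map (\<lambda>c _. c) (map int_encode (lrs_a X z)) @ map (\<lambda>m xs. int_encode (useq X Y z s (int (xs ! 0)) (int (xs ! 1)) m)) [0..<6])"
    by (intro list_all2_appendI) (auto simp: list_all2_map1 list_all2_map2 list_all2_same c_cn computes_uterm computes_uterm')
  fix xs :: "nat list" assume "length xs = 2"
  have "map (\<lambda>G. G xs) (map (\<lambda>c _. c) (map int_encode (lrs_a X z)) @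
      map (\<lambda>m xs. int_encode (useq X Y z s (int (xs!0)) (int (xs!1)) m)) [0..<6])
    = map int_encode (lrs_a X z @ map (useq X Y z s (int (xs!0)) (int (xs!1))) [0..<6])" (is "?l = ?r")
    by simp
  show "eval d (map (\<lambda>G. G xs) (map (\<lambda>c _. c) (map int_encode (lrs_a X z)) @
      map (\<lambda>m xs. int_encode (useq X Y z s (int (xs!0)) (int (xs!1)) m)) [0..<6]))
     (dv d (lrs_a X z) (map (useq X Y z s (int (xs!0)) (int (xs!1))) [0..<6]))"
    unfolding \<open>?l = ?r\<close> by (rule conjunct1[OF dv_spec[OF assms lrs_a_ok(1) _ lrs_a_ok(2)]]) simp
qed

definition Rv :: "recf \<Rightarrow> nat \<Rightarrow> nat \<Rightarrow> nat" where
  "Rv d j K = dv d (lrs_a X z) (map (useq X Y z 1 (int j) (int K)) [0..<6]) *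
              dv d (lrs_a X z) (map (useq X Y z (-1) (int j) (int K)) [0..<6])"

lemma computes_R:
  assumes "dspec d"
  shows "computes (r_R d X Y z) 2 (\<lambda>xs. Rv d (xs!0) (xs!1))"
  unfolding r_R_def Rv_def by (intro c_mul computes_Q assms)

lemma Rv_iff:
  assumes "dspec d"
  shows "Rv d j K \<noteq> 0 \<longleftrightarrow> ultimately_nonneg (useq X Y z 1 (int j) (int K)) \<and> ultimately_nonneg (useq X Y z (-1) (int j) (int K))"
  unfolding Rv_def using dv_iff[OF assms] by simp

end

lemma fb1:
  fixes w s PP K :: real
  assumes "0 \<le> w" "w \<le> 4" "3 < PP" "4 * s \<le> PP" "PP \<le> 4 * s + 4/(12*K+1)" "K \<ge> 1"
  shows "0 \<le> w/(4 * s) - w/PP" "w/(4 * s) - w/PP \<le> 2/(9*K)"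
proof -
  have K0: "12*K+1 > 0" using assms by simp
  have e: "4/(12*K+1) \<le> 1/(3*K)" using assms by (simp add: field_simps)
  have s2: "4 * s > 2" using assms e by (smt (verit) divide_le_eq_1_pos)
  have eq: "w/(4 * s) - w/PP = w * (PP - 4 * s) / (4 * s*PP)" using s2 assms by (simp add: field_simps)
  have "0 \<le> w * (PP - 4 * s)" using assms by simp
  then show "0 \<le> w/(4 * s) - w/PP" unfolding eq using s2 assms by simp
  have "w * (PP - 4 * s) \<le> 4 * (1/(3*K))" using assms e by (intro mult_mono) auto
  moreover have "4 * s*PP \<ge> 2 * 3" using s2 assms by (intro mult_mono) auto
  ultimately have "w * (PP - 4 * s) / (4 * s*PP) \<le> 4 * (1/(3*K)) / 6"
    using \<open>0 \<le> w * (PP - 4 * s)\<close> assms by (intro frac_le) auto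
  also have "\<dots> = 2/(9*K)" by simp
  finally show "w/(4 * s) - w/PP \<le> 2/(9*K)" unfolding eq .
qed

lemma fb:
  fixes w s PP K L :: real
  assumes "0 \<le> w" "w \<le> 4" "3 < PP" "4 * s \<le> PP" "PP \<le> 4 * s + 4/(12*K+1)" "K \<ge> 1"
    "w/PP \<le> L" "L \<le> (w + 1/K)/PP"
  shows "\<bar>w/(4 * s) - L\<bar> < 1/K"
proof -
  have a: "0 \<le> w/(4 * s) - w/PP" "w/(4 * s) - w/PP \<le> 2/(9*K)" using fb1[OF assms(1-6)] by auto
  have "L - w/PP \<le> 1/(K*PP)" using assms(8) by (simp add: add_divide_distrib)
  also have "\<dots> \<le> 1/(K*3)" using assms by (intro divide_left_mono mult_left_mono) auto
  finally have b: "L - w/PP \<le> 1/(3*K)" by (simp add: mult.commute)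
  have "2/(9*K) < 1/K" "1/(3*K) < 1/K" using assms by (auto simp: field_simps)
  then show ?thesis using a b assms(7) by (simp add: abs_if)
qed

lemma int_decode_double: "int_decode (2 * A) = int A"
proof -
  have "int_encode (int A) = 2 * A" by (simp add: int_encode_def sum_encode_def)
  then show ?thesis by (metis int_encode_inverse)
qed

lemma rat_of_code_frac: "B \<ge> 1 \<Longrightarrow> rat_of_code (prod_encode (2 * A, B - 1)) = real A / real B"
  unfolding rat_of_code_def by (simp add: int_decode_double)

definition r_main :: "recf \<Rightarrow> int \<Rightarrow> int \<Rightarrow> int \<Rightarrow> recf" where
  "r_main d X Y z = Comp r_penc
     [rMul (cn 2) (rMul (Comp (r_best (r_R d X Y z)) [rMul (cn 4) (rSuc (Proj 1)), rSuc (Proj 1)])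
                       (Comp r_den [rMul (cn 6) (rSuc (Proj 1))])),
      rSub (rMul (cn 4) (rMul (rSuc (Proj 1)) (Comp r_num [rMul (cn 6) (rSuc (Proj 1))]))) (cn 1)]"

context lsetup
begin

lemma computes_main:
  assumes "dspec d"
  shows "computes (r_main d X Y z) 2 (\<lambda>xs. prod_encode
     (2 * (bestf (Rv d) (Suc (xs!1)) (4 * Suc (xs!1)) * pden (6 * Suc (xs!1))),
      4 * (Suc (xs!1) * pnum (6 * Suc (xs!1))) - 1))"
proof -
  have cb: "computes (r_best (r_R d X Y z)) 2 (\<lambda>xs. (\<lambda>a b. bestf (Rv d) b a) (xs!0) (xs!1))"
    using computes_best[where R="Rv d", OF computes_R[OF assms]] by simp
  have cpenc: "computes r_penc 2 (\<lambda>xs. (\<lambda>a b. prod_encode (a, b)) (xs!0) (xs!1))"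
    using computes_penc by simp
  have cden: "computes r_den 1 (\<lambda>xs. pden (xs!0))" by (rule computes_den)
  have cnum: "computes r_num 1 (\<lambda>xs. pnum (xs!0))" by (rule computes_num)
  show ?thesis unfolding r_main_def
    by (intro c_bin[OF cpenc] c_mul c_sub c_cn c_bin[OF cb] c_un[OF cden] c_un[OF cnum] c_suc c_proj) auto
qed


lemma main_correct:
  assumes d: "dspec d" and p: "p > 0"
  shows "\<exists>c. eval (r_main d X Y z) [p, n] c \<and> \<bar>rat_of_code c - lagrange_constant t\<bar> < real p / real (Suc n)"
proof -
  define K where "K = Suc n"
  define js where "js = bestf (Rv d) K (4 * K)"
  define N where "N = 6 * K"
  define c where "c = prod_encode (2 * (js * pden N), 4 * (K * pnum N) - 1)"
  have ev: "eval (r_main d X Y z) [p, n] c"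
    using computes_main[OF d] unfolding computes_def c_def js_def N_def K_def
    by (metis (no_types, lifting) One_nat_def length_Cons list.size(3) nth_Cons_0 nth_Cons_Suc numeral_2_eq_2)
  define L where "L = lagrange_constant t"
  define s where "s = ps N"
  have Kpos: "K \<ge> 1" unfolding K_def by simp
  have NM: "N = 2 * (3 * K)" unfolding N_def by simp
  have pa1: "s \<le> pi / 4" unfolding s_def NM by (rule pi_approx(1))
  have pa2: "pi / 4 \<le> s + 1 / real (4 * (3 * K) + 1)" unfolding s_def NM by (rule pi_approx(2))
  have r12: "real (4 * (3 * K) + 1) = 12 * real K + 1" by simp
  have s4a: "4 * s \<le> pi" using pa1 by simp
  have s4b: "pi \<le> 4 * s + 4 / (12 * real K + 1)" using pa2 unfolding r12 by simp
  have "4 / (12 * real K + 1) \<le> 4 / 13" using Kpos by (intro divide_left_mono) auto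
  then have spos: "s > 0" using s4b pi_gt3 by linarith
  have dpos: "real (pden N) > 0" using pden_pos by simp
  have numr: "real (pnum N) = s * real (pden N)" unfolding s_def by (rule pnum_eq)
  then have "real (pnum N) > 0" using spos dpos by simp
  then have num1: "pnum N \<ge> 1" by simp
  have B1: "4 * (K * pnum N) \<ge> 1" using num1 Kpos by (simp add: Suc_le_eq)
  have rc: "rat_of_code c = real (js * pden N) / real (4 * (K * pnum N))"
    unfolding c_def using rat_of_code_frac[OF B1] by simp
  define w where "w = real js / real K"
  have rcw: "rat_of_code c = w / (4 * s)"
    unfolding rc w_def using numr dpos Kpos by (simp add: field_simps)
  have bs: "js \<le> 4 * K" "js = 0 \<or> Rv d js K \<noteq> 0" "\<And>i. js < i \<Longrightarrow> i \<le> 4 * K \<Longrightarrow> Rv d i K = 0"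
    using bestf_spec[of "Rv d" K "4 * K"] unfolding js_def by auto
  have w0: "0 \<le> w" unfolding w_def by simp
  have w4: "w \<le> 4" unfolding w_def using bs(1) Kpos by (simp add: field_simps)
  have lowj: "real j / real K / pi \<le> L" if "j > 0" "Rv d j K \<noteq> 0" for j
  proof -
    have "ultimately_nonneg (useq X Y z 1 (int j) (int K)) \<and> ultimately_nonneg (useq X Y z (-1) (int j) (int K))"
      using Rv_iff[OF d] that by blast
    then have "(of_int (int j) / of_int (int K)) / pi \<le> L"
      unfolding L_def using that Kpos by (intro L_lower) auto
    then show ?thesis by simp
  qed
  have wl: "w / pi \<le> L"
  proof (cases "js = 0")
    case True then show ?thesis unfolding w_def L_def using L_ge0 by simp
  next
    case False then show ?thesis unfolding w_def using lowj bs(2) by auto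
  qed
  have jlt: "js < 4 * K"
  proof (rule ccontr)
    assume "\<not> js < 4 * K"
    then have "js = 4 * K" using bs(1) by simp
    then have "Rv d (4 * K) K \<noteq> 0" using bs(2) Kpos by auto
    then have "real (4 * K) / real K / pi \<le> L" using Kpos by (intro lowj) auto
    then have "4 / pi \<le> L" using Kpos by simp
    moreover have "L \<le> 1" unfolding L_def by (rule L_le1)
    moreover have "1 < 4 / pi" using pi_less_4 pi_gt_zero by (simp add: field_simps)
    ultimately show False by linarith
  qed
  have "Rv d (Suc js) K = 0" using bs(3)[of "Suc js"] jlt by simp
  then have "\<not> (ultimately_nonneg (useq X Y z 1 (int (Suc js)) (int K)) \<and> ultimately_nonneg (useq X Y z (-1) (int (Suc js)) (int K)))"
    using Rv_iff[OF d] by blast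
  then obtain sg :: int where sg: "sg = 1 \<or> sg = -1" "\<not> ultimately_nonneg (useq X Y z sg (int (Suc js)) (int K))" by blast
  have "L \<le> (of_int (int (Suc js)) / of_int (int K)) / pi"
    unfolding L_def using sg Kpos by (intro L_upper) auto
  then have wu: "L \<le> (w + 1 / real K) / pi" unfolding w_def using Kpos by (simp add: add_divide_distrib)
  have "\<bar>w / (4 * s) - L\<bar> < 1 / real K"
    using fb[OF w0 w4 pi_gt3 s4a s4b _ wl wu] Kpos by simp
  also have "\<dots> \<le> real p / real (Suc n)" unfolding K_def using p by (simp add: divide_right_mono)
  finally have "\<bar>rat_of_code c - lagrange_constant t\<bar> < real p / real (Suc n)" using rcw unfolding L_def by simp
  then show ?thesis using ev by blast
qed

end

theorem theorem5p1:
  assumes "UPP_decidable_order6"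
  shows "\<forall>t \<in> setT. computable_real (lagrange_constant t)"
proof
  fix x assume "x \<in> setT"
  then obtain alpha where al: "alpha \<in> setA" "x = Arg alpha / (2*pi)" unfolding setT_def by blast
  obtain d where d: "dspec d" using assms unfolding UPP_decidable_order6_def dspec_def by blast
  obtain X Y z where ls: "lsetup X Y z (Arg alpha)" using setA_setup[OF al(1)] by blast
  interpret lsetup X Y z "Arg alpha" by (rule ls)
  have tx: "t = x" unfolding t_def al(2) ..
  show "computable_real (lagrange_constant x)"
    unfolding computable_real_def
    using main_correct[OF d] unfolding tx by blast
qed

end
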